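(* For a mutually orthogonal $d$-dimensional pure-state ensemble $\Omega = \{(1/k,|\psi_j\rangle)\}_{j=0}^{k-1}$, \[ \mathbf{C}_{\mathrm{MIO}}(\Omega) + \mathbf{S}(\Omega) \leq \log_2 d . \]
   Context: Fix the incoherent basis as the computational basis $\{|i\rangle\}$; incoherent states $\mathcal{I}$ are density matrices diagonal in this basis, and MIO (maximally incoherent operations) are the quantum channels mapping $\mathcal{I}$ into itself. The robustness of coherence is $C_R(\rho)=\min\{s\ge 0 : (\rho+s\tau)/(1+s)\in\mathcal{I} \text{ for some state } \tau\}$. For an ensemble $\Omega=\{(p_j,\rho_j)\}_{j=0}^{k-1}$ of states on a $d$-dimensional system $A$, the post-discrimination coherence is $\mathbf{C}_{\mathrm{MIO}}(\Omega)=\log_2(1+\eta)$ with $\eta=\max \sum_j p_j C_R(\sigma_j)$, the maximum taken over MIO channels $\mathcal{N}_{A\to BA'}$ ($\dim B=k$, $A'\cong A$) with $\sigma_j=\mathrm{tr}_B[\mathcal{N}(\rho_j)]$ and $\sum_j p_j \mathrm{tr}[\mathcal{N}(\rho_j)(|j\rangle\langle j|_B\otimes I_{A'})]=P_{\mathrm{suc}}(\Omega)$, where $P_{\mathrm{suc}}(\Omega)=\max_{\text{POVMs }\{E_j\}}\sum_j p_j\mathrm{tr}(E_j\rho_j)$ is the optimal (minimum-error) discrimination probability. The distinguishability is $\mathbf{S}(\Omega)=S(\hat\omega)$, the von Neumann entropy of the average state $\hat\omega=\sum_j p_j|\psi_j\rangle\langle\psi_j|$. *)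

theory Defs
  imports "Jordan_Normal_Form.Schur_Decomposition" "Jordan_Normal_Form.Char_Poly"
begin

definition mtrace :: "complex mat \<Rightarrow> complex" where
  "mtrace A = (\<Sum>i<dim_row A. A $$ (i, i))"

definition hermitian :: "complex mat \<Rightarrow> bool" where
  "hermitian A \<longleftrightarrow> A = mat_adjoint A"

definition psd :: "nat \<Rightarrow> complex mat \<Rightarrow> bool" where
  "psd n A \<longleftrightarrow> A \<in> carrier_mat n n \<and> hermitian A \<and>
     (\<forall>v \<in> carrier_vec n. Im (conjugate v \<bullet> (A *\<^sub>v v)) = 0 \<and> Re (conjugate v \<bullet> (A *\<^sub>v v)) \<ge> 0)"

definition density :: "nat \<Rightarrow> complex mat \<Rightarrow> bool" where
  "density n \<rho> \<longleftrightarrow> psd n \<rho> \<and> mtrace \<rho> = 1"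

definition incoherent :: "nat \<Rightarrow> complex mat \<Rightarrow> bool" where
  "incoherent n \<rho> \<longleftrightarrow> density n \<rho> \<and> diagonal_mat \<rho>"

definition proj :: "complex vec \<Rightarrow> complex mat" where
  "proj v = mat (dim_vec v) (dim_vec v) (\<lambda>(a, b). v $ a * cnj (v $ b))"

definition kraus_channel :: "nat \<Rightarrow> nat \<Rightarrow> complex mat list \<Rightarrow> bool" where
  "kraus_channel n m Ks \<longleftrightarrow> (\<forall>K \<in> set Ks. K \<in> carrier_mat m n) \<and>
     foldr (\<lambda>K acc. mat_adjoint K * K + acc) Ks (0\<^sub>m n n) = 1\<^sub>m n"

definition apply_channel :: "nat \<Rightarrow> complex mat list \<Rightarrow> complex mat \<Rightarrow> complex mat" where
  "apply_channel m Ks \<rho> = foldr (\<lambda>K acc. K * \<rho> * mat_adjoint K + acc) Ks (0\<^sub>m m m)"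

definition MIO :: "nat \<Rightarrow> nat \<Rightarrow> complex mat list \<Rightarrow> bool" where
  "MIO n m Ks \<longleftrightarrow> kraus_channel n m Ks \<and>
     (\<forall>\<rho>. incoherent n \<rho> \<longrightarrow> incoherent m (apply_channel m Ks \<rho>))"

text \<open>Bipartite system B (dim k) tensor A' (dim d): basis |j>|a> has index j*d + a.
  Partial trace over B, and tr[M (|j><j|_B \<otimes> I_A')].\<close>
definition ptrace_B :: "nat \<Rightarrow> nat \<Rightarrow> complex mat \<Rightarrow> complex mat" where
  "ptrace_B k d M = mat d d (\<lambda>(a, b). \<Sum>j<k. M $$ (j * d + a, j * d + b))"

definition block_weight :: "nat \<Rightarrow> nat \<Rightarrow> complex mat \<Rightarrow> complex" where
  "block_weight d j M = (\<Sum>a<d. M $$ (j * d + a, j * d + a))"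

definition robustness :: "nat \<Rightarrow> complex mat \<Rightarrow> real" where
  "robustness n \<rho> = Inf {s. s \<ge> 0 \<and> (\<exists>\<tau>. density n \<tau> \<and>
      incoherent n (complex_of_real (1 / (1 + s)) \<cdot>\<^sub>m (\<rho> + complex_of_real s \<cdot>\<^sub>m \<tau>)))}"

definition povm :: "nat \<Rightarrow> nat \<Rightarrow> (nat \<Rightarrow> complex mat) \<Rightarrow> bool" where
  "povm n k E \<longleftrightarrow> (\<forall>j<k. psd n (E j)) \<and> mat n n (\<lambda>(a, b). \<Sum>j<k. E j $$ (a, b)) = 1\<^sub>m n"

definition P_suc :: "nat \<Rightarrow> nat \<Rightarrow> (nat \<Rightarrow> real) \<Rightarrow> (nat \<Rightarrow> complex mat) \<Rightarrow> real" where
  "P_suc d k p \<rho> = Sup {(\<Sum>j<k. p j * Re (mtrace (E j * \<rho> j))) | E. povm d k E}"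

definition C_MIO :: "nat \<Rightarrow> nat \<Rightarrow> (nat \<Rightarrow> real) \<Rightarrow> (nat \<Rightarrow> complex mat) \<Rightarrow> real" where
  "C_MIO d k p \<rho> = log 2 (1 + Sup {(\<Sum>j<k. p j * robustness d (ptrace_B k d (apply_channel (k * d) Ks (\<rho> j))))
      | Ks. MIO d (k * d) Ks \<and>
            (\<Sum>j<k. p j * Re (block_weight d j (apply_channel (k * d) Ks (\<rho> j)))) = P_suc d k p \<rho>})"

definition ent_term :: "real \<Rightarrow> real" where
  "ent_term x = (if x \<le> 0 then 0 else - x * log 2 x)"

definition vn_entropy :: "complex mat \<Rightarrow> real" where
  "vn_entropy \<rho> = sum_mset (image_mset (\<lambda>x. ent_term (Re x)) (proots (char_poly \<rho>)))"

definition distinguishability :: "nat \<Rightarrow> nat \<Rightarrow> (nat \<Rightarrow> real) \<Rightarrow> (nat \<Rightarrow> complex vec) \<Rightarrow> real" where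
  "distinguishability d k p \<psi> = vn_entropy (mat d d (\<lambda>(a, b). \<Sum>j<k. complex_of_real (p j) * proj (\<psi> j) $$ (a, b)))"

end

theory Submission
  imports Defs
begin


lemma adj_carrier: "A \<in> carrier_mat m n \<Longrightarrow> mat_adjoint A \<in> carrier_mat n m"
  unfolding mat_adjoint_def by auto

lemma adj_index: "A \<in> carrier_mat m n \<Longrightarrow> i < n \<Longrightarrow> j < m \<Longrightarrow> mat_adjoint A $$ (i,j) = cnj (A $$ (j,i))"
  unfolding mat_adjoint_def by (auto simp: mat_of_rows_index)

definition qfs :: "nat \<Rightarrow> complex mat \<Rightarrow> (nat \<Rightarrow> complex) \<Rightarrow> complex" where
  "qfs n A v = (\<Sum>a<n. \<Sum>b<n. cnj (v a) * A $$ (a,b) * v b)"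

lemma qf_expand:
  assumes "A \<in> carrier_mat n n" "v \<in> carrier_vec n"
  shows "conjugate v \<bullet> (A *\<^sub>v v) = qfs n A (\<lambda>i. v $ i)"
  using assms unfolding qfs_def
  by (auto simp: scalar_prod_def mult_mat_vec_def row_def sum_distrib_left atLeast0LessThan mult.assoc intro!: sum.cong)


lemma hermitian_iff:
  assumes A: "A \<in> carrier_mat n n"
  shows "hermitian A \<longleftrightarrow> (\<forall>i<n. \<forall>j<n. A $$ (i,j) = cnj (A $$ (j,i)))"
proof -
  have B: "mat_adjoint A \<in> carrier_mat n n" using adj_carrier[OF A] .
  have "A = mat_adjoint A \<longleftrightarrow> (\<forall>i<n. \<forall>j<n. A $$ (i,j) = mat_adjoint A $$ (i,j))"
    using A B by (metis carrier_matD(1) carrier_matD(2) eq_matI)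
  also have "\<dots> \<longleftrightarrow> (\<forall>i<n. \<forall>j<n. A $$ (i,j) = cnj (A $$ (j,i)))"
    using adj_index[OF A] by simp
  finally show ?thesis unfolding hermitian_def .
qed

lemma psd_iff:
  "psd n A \<longleftrightarrow> A \<in> carrier_mat n n \<and> (\<forall>i<n. \<forall>j<n. A $$ (i,j) = cnj (A $$ (j,i))) \<and>
     (\<forall>v. Im (qfs n A v) = 0 \<and> 0 \<le> Re (qfs n A v))"
proof
  assume p: "psd n A"
  hence A: "A \<in> carrier_mat n n" unfolding psd_def by auto
  have h: "hermitian A" using p unfolding psd_def by auto
  have q: "\<And>w. w \<in> carrier_vec n \<Longrightarrow> Im (conjugate w \<bullet> (A *\<^sub>v w)) = 0 \<and> Re (conjugate w \<bullet> (A *\<^sub>v w)) \<ge> 0"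
    using p unfolding psd_def by blast
  show "A \<in> carrier_mat n n \<and> (\<forall>i<n. \<forall>j<n. A $$ (i,j) = cnj (A $$ (j,i))) \<and>
     (\<forall>v. Im (qfs n A v) = 0 \<and> 0 \<le> Re (qfs n A v))"
  proof -
    have h2: "\<forall>i<n. \<forall>j<n. A $$ (i,j) = cnj (A $$ (j,i))" using h hermitian_iff[OF A] by blast
    have h3: "Im (qfs n A v) = 0 \<and> 0 \<le> Re (qfs n A v)" for v
    proof -
      have eq: "qfs n A v = conjugate (vec n v) \<bullet> (A *\<^sub>v (vec n v))"
        using qf_expand[OF A vec_carrier, of v] unfolding qfs_def by simp
      show ?thesis using q[OF vec_carrier] unfolding eq by auto
    qed
    show ?thesis using A h2 h3 by blast
  qed
next
  assume r: "A \<in> carrier_mat n n \<and> (\<forall>i<n. \<forall>j<n. A $$ (i,j) = cnj (A $$ (j,i))) \<and>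
     (\<forall>v. Im (qfs n A v) = 0 \<and> 0 \<le> Re (qfs n A v))"
  hence A: "A \<in> carrier_mat n n" by blast
  have h: "hermitian A" using r hermitian_iff[OF A] by blast
  show "psd n A" unfolding psd_def
  proof (intro conjI A h ballI)
    fix w :: "complex vec" assume w: "w \<in> carrier_vec n"
    show "Im (conjugate w \<bullet> (A *\<^sub>v w)) = 0" "Re (conjugate w \<bullet> (A *\<^sub>v w)) \<ge> 0"
      unfolding qf_expand[OF A w] using r by blast+
  qed
qed

lemma mtrace_eq: "A \<in> carrier_mat n n \<Longrightarrow> mtrace A = (\<Sum>i<n. A $$ (i,i))"
  unfolding mtrace_def by auto

lemma channel_entry:
  assumes "\<forall>K\<in>set Ks. K \<in> carrier_mat m n" "\<rho> \<in> carrier_mat n n"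
  shows "apply_channel m Ks \<rho> \<in> carrier_mat m m \<and> (\<forall>r<m. \<forall>s<m. apply_channel m Ks \<rho> $$ (r,s) =
     (\<Sum>K\<leftarrow>Ks. \<Sum>c<n. \<Sum>c'<n. K $$ (r,c) * \<rho> $$ (c,c') * cnj (K $$ (s,c'))))"
  using assms(1)
proof (induction Ks)
  case Nil
  then show ?case by (auto simp: apply_channel_def)
next
  case (Cons K Ks)
  have K: "K \<in> carrier_mat m n" using Cons by auto
  have IH: "apply_channel m Ks \<rho> \<in> carrier_mat m m \<and> (\<forall>r<m. \<forall>s<m. apply_channel m Ks \<rho> $$ (r,s) =
     (\<Sum>K\<leftarrow>Ks. \<Sum>c<n. \<Sum>c'<n. K $$ (r,c) * \<rho> $$ (c,c') * cnj (K $$ (s,c'))))" using Cons by auto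
  have eq: "apply_channel m (K # Ks) \<rho> = K * \<rho> * mat_adjoint K + apply_channel m Ks \<rho>"
    unfolding apply_channel_def by simp
  have c1: "K * \<rho> * mat_adjoint K \<in> carrier_mat m m" using K assms(2) adj_carrier[OF K] by auto
  have e1: "(K * \<rho> * mat_adjoint K) $$ (r,s) = (\<Sum>c<n. \<Sum>c'<n. K $$ (r,c) * \<rho> $$ (c,c') * cnj (K $$ (s,c')))"
    if "r < m" "s < m" for r s
  proof -
    have "(K * \<rho> * mat_adjoint K) $$ (r,s) = (\<Sum>c'<n. (\<Sum>c<n. K $$ (r,c) * \<rho> $$ (c,c')) * cnj (K $$ (s,c')))"
      using K assms(2) adj_carrier[OF K] adj_index[OF K] that
      by (auto simp: times_mat_def scalar_prod_def row_def col_def atLeast0LessThan intro!: sum.cong)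
    also have "\<dots> = (\<Sum>c<n. \<Sum>c'<n. K $$ (r,c) * \<rho> $$ (c,c') * cnj (K $$ (s,c')))"
      by (subst sum.swap) (simp add: sum_distrib_right)
    finally show ?thesis .
  qed
  show ?case unfolding eq using IH c1 e1 by auto
qed

lemma kraus_entry:
  assumes "kraus_channel n m Ks"
  shows "\<forall>c<n. \<forall>c'<n. (\<Sum>K\<leftarrow>Ks. \<Sum>r<m. cnj (K $$ (r,c)) * K $$ (r,c')) = (if c = c' then 1 else 0)"
proof -
  have car: "\<forall>K\<in>set Ks. K \<in> carrier_mat m n" using assms unfolding kraus_channel_def by auto
  have gen: "foldr (\<lambda>K acc. mat_adjoint K * K + acc) Ks (0\<^sub>m n n) \<in> carrier_mat n n \<and>
     (\<forall>c<n. \<forall>c'<n. foldr (\<lambda>K acc. mat_adjoint K * K + acc) Ks (0\<^sub>m n n) $$ (c,c') =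
       (\<Sum>K\<leftarrow>Ks. \<Sum>r<m. cnj (K $$ (r,c)) * K $$ (r,c')))"
    using car
  proof (induction Ks)
    case Nil
    then show ?case by auto
  next
    case (Cons K Ks)
    have K: "K \<in> carrier_mat m n" using Cons by auto
    have e1: "(mat_adjoint K * K) $$ (c,c') = (\<Sum>r<m. cnj (K $$ (r,c)) * K $$ (r,c'))" if "c < n" "c' < n" for c c'
      using K adj_carrier[OF K] adj_index[OF K] that
      by (auto simp: times_mat_def scalar_prod_def row_def col_def atLeast0LessThan intro!: sum.cong)
    show ?case using Cons e1 K adj_carrier[OF K] by auto
  qed
  show ?thesis using gen assms unfolding kraus_channel_def by auto
qed


lemma swap3: "(\<Sum>r\<in>R. \<Sum>s\<in>S. \<Sum>t\<in>T. f r s t) = (\<Sum>t\<in>T. \<Sum>r\<in>R. \<Sum>s\<in>S. f r s t)"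
proof -
  have "(\<Sum>r\<in>R. \<Sum>s\<in>S. \<Sum>t\<in>T. f r s t) = (\<Sum>r\<in>R. \<Sum>t\<in>T. \<Sum>s\<in>S. f r s t)"
    by (rule sum.cong[OF refl], rule sum.swap)
  also have "\<dots> = (\<Sum>t\<in>T. \<Sum>r\<in>R. \<Sum>s\<in>S. f r s t)" by (rule sum.swap)
  finally show ?thesis .
qed

lemma qf_abstract: "(\<Sum>r<m. \<Sum>s<m. cnj (v r) * (\<Sum>t<L. \<Sum>c<n. \<Sum>c'<n. K t r c * p c c' * cnj (K t s c')) * v s)
   = (\<Sum>t<L. \<Sum>c<n. \<Sum>c'<n. cnj (\<Sum>r<m. cnj (K t r c) * v r) * p c c' * (\<Sum>s<m. cnj (K t s c') * v s))"
proof -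
  have "?thesis \<longleftrightarrow> (\<Sum>r<m. \<Sum>s<m. \<Sum>t<L. \<Sum>c<n. \<Sum>c'<n. cnj (v r) * K t r c * p c c' * cnj (K t s c') * v s) =
     (\<Sum>t<L. \<Sum>c<n. \<Sum>c'<n. \<Sum>r<m. \<Sum>s<m. cnj (v r) * K t r c * p c c' * cnj (K t s c') * v s)"
    by (simp add: sum_distrib_left sum_distrib_right mult_ac)
  moreover have "(\<Sum>r<m. \<Sum>s<m. \<Sum>t<L. \<Sum>c<n. \<Sum>c'<n. cnj (v r) * K t r c * p c c' * cnj (K t s c') * v s) =
     (\<Sum>t<L. \<Sum>c<n. \<Sum>c'<n. \<Sum>r<m. \<Sum>s<m. cnj (v r) * K t r c * p c c' * cnj (K t s c') * v s)"
    apply (rule trans[OF swap3])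
    apply (rule sum.cong[OF refl])
    apply (rule trans[OF swap3])
    apply (rule sum.cong[OF refl])
    apply (rule trans[OF swap3])
    apply (rule refl)
    done
  ultimately show ?thesis by blast
qed

lemma sum_list_idx: "(\<Sum>K\<leftarrow>Ks. f K) = (\<Sum>t<length Ks. f (Ks ! t))"
  by (simp add: sum_list_sum_nth atLeast0LessThan)

lemma channel_entry_idx:
  assumes "\<forall>K\<in>set Ks. K \<in> carrier_mat m n" "\<rho> \<in> carrier_mat n n" "r < m" "s < m"
  shows "apply_channel m Ks \<rho> $$ (r,s) =
     (\<Sum>t<length Ks. \<Sum>c<n. \<Sum>c'<n. (Ks!t) $$ (r,c) * \<rho> $$ (c,c') * cnj ((Ks!t) $$ (s,c')))"
  using channel_entry[OF assms(1,2)] assms(3,4) sum_list_idx by auto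

lemma channel_carrier:
  assumes "\<forall>K\<in>set Ks. K \<in> carrier_mat m n" "\<rho> \<in> carrier_mat n n"
  shows "apply_channel m Ks \<rho> \<in> carrier_mat m m"
  using channel_entry[OF assms] by auto

lemma channel_psd:
  assumes Ks: "\<forall>K\<in>set Ks. K \<in> carrier_mat m n" and p: "psd n \<rho>"
  shows "psd m (apply_channel m Ks \<rho>)"
proof -
  have rho: "\<rho> \<in> carrier_mat n n" and h: "\<forall>i<n. \<forall>j<n. \<rho> $$ (i,j) = cnj (\<rho> $$ (j,i))"
    and q: "\<And>v. Im (qfs n \<rho> v) = 0 \<and> 0 \<le> Re (qfs n \<rho> v)"
    using p unfolding psd_iff by blast+
  let ?N = "apply_channel m Ks \<rho>"
  let ?K = "\<lambda>t r c. (Ks!t) $$ (r,c)"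
  let ?L = "length Ks"
  have N: "?N \<in> carrier_mat m m" using channel_carrier[OF Ks rho] .
  have e: "\<And>r s. r < m \<Longrightarrow> s < m \<Longrightarrow> ?N $$ (r,s) =
     (\<Sum>t<?L. \<Sum>c<n. \<Sum>c'<n. ?K t r c * \<rho> $$ (c,c') * cnj (?K t s c'))"
    using channel_entry_idx[OF Ks rho] by blast
  have herm: "\<forall>i<m. \<forall>j<m. ?N $$ (i,j) = cnj (?N $$ (j,i))"
  proof (intro allI impI)
    fix i j assume ij: "i < m" "j < m"
    have "cnj (?N $$ (j,i)) = (\<Sum>t<?L. \<Sum>c<n. \<Sum>c'<n. cnj (?K t j c) * \<rho> $$ (c',c) * ?K t i c')"
      unfolding e[OF ij(2) ij(1)] cnj_sum
    proof (intro sum.cong refl)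
      fix t c c' assume "c \<in> {..<n}" "c' \<in> {..<n}"
      hence "cnj (\<rho> $$ (c,c')) = \<rho> $$ (c',c)" using h[rule_format, of c' c] by simp
      thus "cnj (?K t j c * \<rho> $$ (c, c') * cnj (?K t i c')) = cnj (?K t j c) * \<rho> $$ (c',c) * ?K t i c'"
        by simp
    qed
    also have "\<dots> = (\<Sum>t<?L. \<Sum>c'<n. \<Sum>c<n. cnj (?K t j c) * \<rho> $$ (c',c) * ?K t i c')"
      by (rule sum.cong[OF refl], rule sum.swap)
    also have "\<dots> = ?N $$ (i,j)" unfolding e[OF ij] by (simp add: mult_ac)
    finally show "?N $$ (i,j) = cnj (?N $$ (j,i))" by simp
  qed
  have qq: "Im (qfs m ?N v) = 0 \<and> 0 \<le> Re (qfs m ?N v)" for v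
  proof -
    have "qfs m ?N v = (\<Sum>r<m. \<Sum>s<m. cnj (v r) * (\<Sum>t<?L. \<Sum>c<n. \<Sum>c'<n. ?K t r c * \<rho> $$ (c,c') * cnj (?K t s c')) * v s)"
      unfolding qfs_def using e by simp
    also have "\<dots> = (\<Sum>t<?L. qfs n \<rho> (\<lambda>c. \<Sum>r<m. cnj (?K t r c) * v r))"
      unfolding qf_abstract qfs_def by simp
    finally have eq: "qfs m ?N v = (\<Sum>t<?L. qfs n \<rho> (\<lambda>c. \<Sum>r<m. cnj (?K t r c) * v r))" .
    show ?thesis unfolding eq using q by (simp add: sum_nonneg Im_sum Re_sum)
  qed
  show ?thesis unfolding psd_iff using N herm qq by blast
qed

lemma swap22: "(\<Sum>a\<in>A. \<Sum>b\<in>B. \<Sum>c\<in>C. \<Sum>d\<in>D. f a b c d) = (\<Sum>c\<in>C. \<Sum>d\<in>D. \<Sum>a\<in>A. \<Sum>b\<in>B. f a b c d)"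
proof -
  have "(\<Sum>a\<in>A. \<Sum>b\<in>B. \<Sum>c\<in>C. \<Sum>d\<in>D. f a b c d) = (\<Sum>c\<in>C. \<Sum>a\<in>A. \<Sum>b\<in>B. \<Sum>d\<in>D. f a b c d)"
    by (rule swap3)
  also have "\<dots> = (\<Sum>c\<in>C. \<Sum>d\<in>D. \<Sum>a\<in>A. \<Sum>b\<in>B. f a b c d)"
    by (rule sum.cong[OF refl], rule swap3)
  finally show ?thesis .
qed

lemma channel_trace:
  assumes kc: "kraus_channel n m Ks" and rho: "\<rho> \<in> carrier_mat n n"
  shows "(\<Sum>r<m. apply_channel m Ks \<rho> $$ (r,r)) = (\<Sum>c<n. \<rho> $$ (c,c))"
proof -
  have Ks: "\<forall>K\<in>set Ks. K \<in> carrier_mat m n" using kc unfolding kraus_channel_def by auto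
  let ?K = "\<lambda>t r c. (Ks!t) $$ (r,c)"
  let ?L = "length Ks"
  have kr: "\<And>c c'. c < n \<Longrightarrow> c' < n \<Longrightarrow> (\<Sum>t<?L. \<Sum>r<m. cnj (?K t r c) * ?K t r c') = (if c = c' then 1 else 0)"
    using kraus_entry[OF kc] by (simp add: sum_list_idx)
  have "(\<Sum>r<m. apply_channel m Ks \<rho> $$ (r,r)) = (\<Sum>r<m. \<Sum>t<?L. \<Sum>c<n. \<Sum>c'<n. ?K t r c * \<rho> $$ (c,c') * cnj (?K t r c'))"
    using channel_entry_idx[OF Ks rho] by simp
  also have "\<dots> = (\<Sum>t<?L. \<Sum>r<m. \<Sum>c<n. \<Sum>c'<n. ?K t r c * \<rho> $$ (c,c') * cnj (?K t r c'))"
    by (rule sum.swap)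
  also have "\<dots> = (\<Sum>c<n. \<Sum>c'<n. \<Sum>t<?L. \<Sum>r<m. ?K t r c * \<rho> $$ (c,c') * cnj (?K t r c'))"
    by (rule swap22)
  also have "\<dots> = (\<Sum>c<n. \<Sum>c'<n. \<rho> $$ (c,c') * (\<Sum>t<?L. \<Sum>r<m. cnj (?K t r c') * ?K t r c))"
    by (simp add: sum_distrib_left mult_ac)
  also have "\<dots> = (\<Sum>c<n. \<Sum>c'<n. \<rho> $$ (c,c') * (if c' = c then 1 else 0))"
    using kr by simp
  also have "\<dots> = (\<Sum>c<n. \<Sum>c'<n. if c = c' then \<rho> $$ (c,c') else 0)"
    by (intro sum.cong refl) auto
  also have "\<dots> = (\<Sum>c<n. \<rho> $$ (c,c))"
    by simp
  finally show ?thesis .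
qed

lemma channel_lin:
  assumes Ks: "\<forall>K\<in>set Ks. K \<in> carrier_mat m n" and A: "A \<in> carrier_mat n n" and B: "B \<in> carrier_mat n n"
    and C: "C \<in> carrier_mat n n" and CAB: "\<And>a b. a < n \<Longrightarrow> b < n \<Longrightarrow> C $$ (a,b) = x * A $$ (a,b) + y * B $$ (a,b)"
    and rs: "r < m" "s < m"
  shows "apply_channel m Ks C $$ (r,s) = x * apply_channel m Ks A $$ (r,s) + y * apply_channel m Ks B $$ (r,s)"
  unfolding channel_entry_idx[OF Ks A rs] channel_entry_idx[OF Ks B rs] channel_entry_idx[OF Ks C rs]
  by (simp add: CAB sum_distrib_left sum.distrib algebra_simps)

lemma sum_two:
  fixes n r s :: nat
  assumes "r \<noteq> s" "r < n" "s < n" "\<And>a. a \<noteq> r \<Longrightarrow> a \<noteq> s \<Longrightarrow> f a = 0"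
  shows "(\<Sum>a<n. f a) = f r + f s"
proof -
  have "(\<Sum>a<n. f a) = (\<Sum>a\<in>{r,s}. f a)"
    by (rule sum.mono_neutral_right) (use assms in auto)
  thus ?thesis using assms by simp
qed

lemma qfs_unit:
  assumes "r < n"
  shows "qfs n A (\<lambda>i. if i = r then 1 else 0) = A $$ (r,r)"
proof -
  have "(\<Sum>b<n. cnj (if a = r then 1 else 0) * A $$ (a, b) * (if b = r then 1 else 0)) = (if a = r then A $$ (a,r) else 0)" for a
    using assms by (simp add: if_distrib[of "\<lambda>x. _ * x"] if_distrib[of "\<lambda>x. x * _"] cong: if_cong)
  thus ?thesis unfolding qfs_def using assms by simp
qed

lemma psd_diag:
  assumes "psd n A" "r < n"
  shows "A $$ (r,r) = complex_of_real (Re (A $$ (r,r))) \<and> 0 \<le> Re (A $$ (r,r))"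
proof -
  have q: "Im (qfs n A v) = 0 \<and> 0 \<le> Re (qfs n A v)" for v using assms(1) unfolding psd_iff by blast
  from q[of "\<lambda>i. if i = r then 1 else 0"] show ?thesis unfolding qfs_unit[OF assms(2)]
    by (simp add: complex_eq_iff)
qed

lemma qfs_two:
  assumes "r \<noteq> s" "r < n" "s < n"
  shows "qfs n A (\<lambda>i. if i = r then x else if i = s then 1 else 0) =
    cnj x * x * A $$ (r,r) + cnj x * A $$ (r,s) + x * A $$ (s,r) + A $$ (s,s)"
proof -
  let ?v = "\<lambda>i. if i = r then x else if i = s then 1 else (0::complex)"
  have inner: "(\<Sum>b<n. cnj (?v a) * A $$ (a,b) * ?v b) = cnj (?v a) * A $$ (a,r) * x + cnj (?v a) * A $$ (a,s)" for a
    by (subst sum_two[OF assms]) (use assms in auto)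
  have "qfs n A ?v = (\<Sum>a<n. cnj (?v a) * A $$ (a,r) * x + cnj (?v a) * A $$ (a,s))"
    unfolding qfs_def inner ..
  also have "\<dots> = (cnj x * A $$ (r,r) * x + cnj x * A $$ (r,s)) + (A $$ (s,r) * x + A $$ (s,s))"
    by (subst sum_two[OF assms]) (use assms in auto)
  finally show ?thesis by (simp add: algebra_simps)
qed

lemma psd_zero_row:
  assumes p: "psd n A" and r: "r < n" and s: "s < n" and z: "A $$ (r,r) = 0"
  shows "A $$ (r,s) = 0"
proof (rule ccontr)
  assume nz: "A $$ (r,s) \<noteq> 0"
  hence rs: "r \<noteq> s" using z by auto
  have h: "A $$ (s,r) = cnj (A $$ (r,s))" using p r s unfolding psd_iff by blast
  have q: "0 \<le> Re (qfs n A v)" for v using p unfolding psd_iff by blast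
  define w where "w = A $$ (r,s)"
  define c where "c = (Re (A $$ (s,s)) + 1) / (cmod w)^2"
  have cm: "cmod w > 0" using nz unfolding w_def by simp
  have ss: "0 \<le> Re (A $$ (s,s))" using psd_diag[OF p s] by simp
  define x where "x = - complex_of_real c * w"
  have wcw: "cnj w * w = complex_of_real ((cmod w)^2)"
    by (metis complex_norm_square mult.commute of_real_power)
  have "qfs n A (\<lambda>i. if i = r then x else if i = s then 1 else 0) = cnj x * w + x * cnj w + A $$ (s,s)"
    unfolding qfs_two[OF rs r s] z h w_def by simp
  also have "\<dots> = - 2 * complex_of_real c * (cnj w * w) + A $$ (s,s)"
    unfolding x_def by (simp add: algebra_simps)
  finally have "Re (qfs n A (\<lambda>i. if i = r then x else if i = s then 1 else 0)) = - 2 * c * (cmod w)^2 + Re (A $$ (s,s))"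
    unfolding wcw by simp
  also have "\<dots> = - 2 * (Re (A $$ (s,s)) + 1) + Re (A $$ (s,s))"
    unfolding c_def using cm by simp
  also have "\<dots> < 0" using ss by simp
  finally show False using q[of "\<lambda>i. if i = r then x else if i = s then 1 else 0"] by simp
qed

lemma qfs_mat: "qfs n (mat n n f) v = (\<Sum>a<n. \<Sum>b<n. cnj (v a) * f (a,b) * v b)"
  unfolding qfs_def by (intro sum.cong refl) auto

lemma qfs_comb:
  assumes "\<And>a b. a < n \<Longrightarrow> b < n \<Longrightarrow> C $$ (a,b) = x * A $$ (a,b) + y * B $$ (a,b)"
  shows "qfs n C v = x * qfs n A v + y * qfs n B v"
  unfolding qfs_def using assms by (simp add: sum_distrib_left sum.distrib algebra_simps)

lemma psd_comb:
  assumes A: "psd n A" and B: "psd n B" and x: "x \<ge> 0" and y: "y \<ge> 0"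
    and C: "C \<in> carrier_mat n n"
    and CAB: "\<And>a b. a < n \<Longrightarrow> b < n \<Longrightarrow> C $$ (a,b) = complex_of_real x * A $$ (a,b) + complex_of_real y * B $$ (a,b)"
  shows "psd n C"
proof -
  have hA: "\<forall>i<n. \<forall>j<n. A $$ (i,j) = cnj (A $$ (j,i))" and qA: "\<And>v. Im (qfs n A v) = 0 \<and> 0 \<le> Re (qfs n A v)"
    using A unfolding psd_iff by blast+
  have hB: "\<forall>i<n. \<forall>j<n. B $$ (i,j) = cnj (B $$ (j,i))" and qB: "\<And>v. Im (qfs n B v) = 0 \<and> 0 \<le> Re (qfs n B v)"
    using B unfolding psd_iff by blast+
  have h: "\<forall>i<n. \<forall>j<n. C $$ (i,j) = cnj (C $$ (j,i))"
  proof (intro allI impI)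
    fix i j assume ij: "i < n" "j < n"
    show "C $$ (i,j) = cnj (C $$ (j,i))"
      unfolding CAB[OF ij] CAB[OF ij(2) ij(1)] using hA[rule_format, OF ij] hB[rule_format, OF ij] by simp
  qed
  have q: "Im (qfs n C v) = 0 \<and> 0 \<le> Re (qfs n C v)" for v
  proof -
    have eq: "qfs n C v = complex_of_real x * qfs n A v + complex_of_real y * qfs n B v"
      by (rule qfs_comb) (rule CAB)
    show ?thesis unfolding eq using qA[of v] qB[of v] x y by simp
  qed
  show ?thesis unfolding psd_iff using C h q by blast
qed

lemma re_cnj_self: "0 \<le> Re (cnj z * z)"
  by (simp add: mult.commute)

locale ons =
  fixes d k :: nat and \<psi> :: "nat \<Rightarrow> complex vec"
  assumes k1: "k \<ge> 1"
    and car: "\<And>j. j < k \<Longrightarrow> \<psi> j \<in> carrier_vec d"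
    and nrm: "\<And>j. j < k \<Longrightarrow> conjugate (\<psi> j) \<bullet> \<psi> j = 1"
    and orth: "\<And>i j. i < k \<Longrightarrow> j < k \<Longrightarrow> i \<noteq> j \<Longrightarrow> conjugate (\<psi> i) \<bullet> \<psi> j = 0"
begin

definition ip :: "nat \<Rightarrow> (nat \<Rightarrow> complex) \<Rightarrow> complex" where
  "ip j v = (\<Sum>a<d. cnj (\<psi> j $ a) * v a)"

lemma on: "i < k \<Longrightarrow> j < k \<Longrightarrow> (\<Sum>a<d. cnj (\<psi> i $ a) * \<psi> j $ a) = (if i = j then 1 else 0)"
proof -
  assume ij: "i < k" "j < k"
  have "conjugate (\<psi> i) \<bullet> \<psi> j = (\<Sum>a<d. cnj (\<psi> i $ a) * \<psi> j $ a)"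
    using car[OF ij(1)] car[OF ij(2)] unfolding scalar_prod_def by (simp add: atLeast0LessThan)
  thus ?thesis using nrm orth ij by metis
qed

lemma ip_psi: "i < k \<Longrightarrow> j < k \<Longrightarrow> ip i (\<lambda>a. \<psi> j $ a) = (if i = j then 1 else 0)"
  unfolding ip_def using on by simp

lemma proj_car: "j < k \<Longrightarrow> proj (\<psi> j) \<in> carrier_mat d d"
  using car unfolding proj_def by auto

lemma proj_idx: "j < k \<Longrightarrow> a < d \<Longrightarrow> b < d \<Longrightarrow> proj (\<psi> j) $$ (a,b) = \<psi> j $ a * cnj (\<psi> j $ b)"
proof -
  assume j: "j < k" and ab: "a < d" "b < d"
  have "dim_vec (\<psi> j) = d" using car[OF j] by auto
  thus ?thesis using ab unfolding proj_def by simp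
qed

lemma qfs_proj: "j < k \<Longrightarrow> qfs d (proj (\<psi> j)) v = cnj (ip j v) * ip j v"
proof -
  assume j: "j < k"
  have "qfs d (proj (\<psi> j)) v = (\<Sum>a<d. \<Sum>b<d. (cnj (v a) * \<psi> j $ a) * (cnj (\<psi> j $ b) * v b))"
    unfolding qfs_def using proj_idx[OF j] by (simp add: mult_ac)
  also have "\<dots> = (\<Sum>a<d. cnj (v a) * \<psi> j $ a) * (\<Sum>b<d. cnj (\<psi> j $ b) * v b)"
    by (simp add: sum_product)
  also have "\<dots> = cnj (ip j v) * ip j v" unfolding ip_def by (simp add: mult_ac)
  finally show ?thesis .
qed

lemma psd_proj: "j < k \<Longrightarrow> psd d (proj (\<psi> j))"
proof -
  assume j: "j < k"
  have h: "\<forall>a<d. \<forall>b<d. proj (\<psi> j) $$ (a,b) = cnj (proj (\<psi> j) $$ (b,a))"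
    using proj_idx[OF j] by simp
  have q: "Im (qfs d (proj (\<psi> j)) v) = 0 \<and> 0 \<le> Re (qfs d (proj (\<psi> j)) v)" for v
    unfolding qfs_proj[OF j] by simp
  show ?thesis unfolding psd_iff using proj_car[OF j] h q by blast
qed

lemma bessel_eq: "(\<Sum>a<d. cnj (v a - (\<Sum>i<k. ip i v * \<psi> i $ a)) * (v a - (\<Sum>i<k. ip i v * \<psi> i $ a)))
   = (\<Sum>a<d. cnj (v a) * v a) - (\<Sum>i<k. cnj (ip i v) * ip i v)"
proof -
  let ?g = "\<lambda>i. ip i v"
  have S1: "(\<Sum>a<d. cnj (v a) * (\<Sum>i<k. ?g i * \<psi> i $ a)) = (\<Sum>i<k. cnj (?g i) * ?g i)"
  proof -
    have "(\<Sum>a<d. cnj (v a) * (\<Sum>i<k. ?g i * \<psi> i $ a)) = (\<Sum>i<k. ?g i * (\<Sum>a<d. cnj (v a) * \<psi> i $ a))"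
      by (simp add: sum_distrib_left sum_distrib_right mult_ac sum.swap[of _ "{..<d}"])
    also have "\<dots> = (\<Sum>i<k. cnj (?g i) * ?g i)"
      unfolding ip_def by (simp add: mult_ac)
    finally show ?thesis .
  qed
  have S2: "(\<Sum>a<d. cnj (\<Sum>i<k. ?g i * \<psi> i $ a) * v a) = (\<Sum>i<k. cnj (?g i) * ?g i)"
  proof -
    have "(\<Sum>a<d. cnj (\<Sum>i<k. ?g i * \<psi> i $ a) * v a) = (\<Sum>i<k. cnj (?g i) * (\<Sum>a<d. cnj (\<psi> i $ a) * v a))"
      by (simp add: sum_distrib_left sum_distrib_right mult_ac sum.swap[of _ "{..<d}"])
    also have "\<dots> = (\<Sum>i<k. cnj (?g i) * ?g i)"
      unfolding ip_def by (simp add: mult_ac)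
    finally show ?thesis .
  qed
  have S3: "(\<Sum>a<d. cnj (\<Sum>i<k. ?g i * \<psi> i $ a) * (\<Sum>j<k. ?g j * \<psi> j $ a)) = (\<Sum>i<k. cnj (?g i) * ?g i)"
  proof -
    have "(\<Sum>a<d. cnj (\<Sum>i<k. ?g i * \<psi> i $ a) * (\<Sum>j<k. ?g j * \<psi> j $ a))
        = (\<Sum>a<d. \<Sum>i<k. \<Sum>j<k. cnj (?g i) * ?g j * (cnj (\<psi> i $ a) * \<psi> j $ a))"
      unfolding cnj_sum sum_product by (intro sum.cong refl) (simp add: mult_ac)
    also have "\<dots> = (\<Sum>i<k. \<Sum>j<k. \<Sum>a<d. cnj (?g i) * ?g j * (cnj (\<psi> i $ a) * \<psi> j $ a))"
      by (rule trans[OF swap3], rule swap3)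
    also have "\<dots> = (\<Sum>i<k. \<Sum>j<k. cnj (?g i) * ?g j * (if i = j then 1 else 0))"
      by (intro sum.cong refl) (simp add: sum_distrib_left[symmetric] on)
    also have "\<dots> = (\<Sum>i<k. cnj (?g i) * ?g i)"
      by (simp add: if_distrib[of "\<lambda>x. _ * x"] cong: if_cong)
    finally show ?thesis .
  qed
  have e: "\<And>x w. cnj (x - w) * (x - w) = cnj x * x - cnj x * w - cnj w * x + cnj w * (w::complex)"
    by (simp add: algebra_simps)
  show ?thesis unfolding e sum.distrib sum_subtractf S1 S2 S3 by simp
qed

lemma bessel: "(\<Sum>i<k. Re (cnj (ip i v) * ip i v)) \<le> (\<Sum>a<d. Re (cnj (v a) * v a))"
proof -
  have "0 \<le> Re (\<Sum>a<d. cnj (v a - (\<Sum>i<k. ip i v * \<psi> i $ a)) * (v a - (\<Sum>i<k. ip i v * \<psi> i $ a)))"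
    unfolding Re_sum by (intro sum_nonneg) (simp only: re_cnj_self)
  thus ?thesis unfolding bessel_eq by (simp add: Re_sum)
qed

definition Qm :: "complex mat" where
  "Qm = mat d d (\<lambda>(a,b). (if a = b then 1 else 0) - (\<Sum>i<k. \<psi> i $ a * cnj (\<psi> i $ b)))"

lemma Qm_car: "Qm \<in> carrier_mat d d" unfolding Qm_def by auto

lemma qfs_Qm: "qfs d Qm v = (\<Sum>a<d. cnj (v a) * v a) - (\<Sum>i<k. cnj (ip i v) * ip i v)"
proof -
  have "qfs d Qm v = (\<Sum>a<d. \<Sum>b<d. cnj (v a) * (if a = b then 1 else 0) * v b) -
      (\<Sum>a<d. \<Sum>b<d. \<Sum>i<k. (cnj (v a) * \<psi> i $ a) * (cnj (\<psi> i $ b) * v b))"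
    unfolding Qm_def qfs_mat by (simp add: algebra_simps sum_distrib_left sum_subtractf)
  also have "(\<Sum>a<d. \<Sum>b<d. \<Sum>i<k. (cnj (v a) * \<psi> i $ a) * (cnj (\<psi> i $ b) * v b)) =
       (\<Sum>i<k. (\<Sum>a<d. cnj (v a) * \<psi> i $ a) * (\<Sum>b<d. cnj (\<psi> i $ b) * v b))"
    by (rule trans[OF swap3]) (simp add: sum_product)
  also have "\<dots> = (\<Sum>i<k. cnj (ip i v) * ip i v)" unfolding ip_def by (simp add: mult_ac)
  finally show ?thesis by (simp add: if_distrib[of "\<lambda>x. _ * x"] if_distrib[of "\<lambda>x. x * _"] cong: if_cong)
qed

lemma psd_Qm: "psd d Qm"
proof -
  have h: "\<forall>a<d. \<forall>b<d. Qm $$ (a,b) = cnj (Qm $$ (b,a))"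
    unfolding Qm_def by (simp add: mult.commute)
  have q: "Im (qfs d Qm v) = 0 \<and> 0 \<le> Re (qfs d Qm v)" for v
    unfolding qfs_Qm using bessel[of v] by (simp add: Im_sum Re_sum)
  show ?thesis unfolding psd_iff using Qm_car h q by blast
qed

end
context ons begin

lemma trace_proj:
  assumes E: "E \<in> carrier_mat d d" and j: "j < k"
  shows "mtrace (E * proj (\<psi> j)) = qfs d E (\<lambda>a. \<psi> j $ a)"
proof -
  have P: "proj (\<psi> j) \<in> carrier_mat d d" using proj_car[OF j] .
  have "mtrace (E * proj (\<psi> j)) = (\<Sum>r<d. \<Sum>c<d. E $$ (r,c) * (\<psi> j $ c * cnj (\<psi> j $ r)))"
    unfolding mtrace_eq[OF mult_carrier_mat[OF E P]] using E P proj_idx[OF j]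
    by (intro sum.cong refl) (simp add: scalar_prod_def row_def col_def atLeast0LessThan)
  also have "\<dots> = qfs d E (\<lambda>a. \<psi> j $ a)" unfolding qfs_def
    by (intro sum.cong refl) (simp add: mult_ac)
  finally show ?thesis .
qed

lemma povm_entries:
  assumes "povm d k E" "a < d" "b < d"
  shows "(\<Sum>i<k. E i $$ (a,b)) = (if a = b then 1 else 0)"
proof -
  have "mat d d (\<lambda>(a, b). \<Sum>j<k. E j $$ (a, b)) $$ (a,b) = (1\<^sub>m d :: complex mat) $$ (a,b)"
    using assms(1) unfolding povm_def by simp
  thus ?thesis using assms(2,3) by simp
qed

lemma qfs_sum_povm:
  assumes "povm d k E"
  shows "(\<Sum>i<k. qfs d (E i) v) = (\<Sum>a<d. cnj (v a) * v a)"
proof -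
  have "(\<Sum>i<k. qfs d (E i) v) = (\<Sum>a<d. \<Sum>b<d. cnj (v a) * (\<Sum>i<k. E i $$ (a,b)) * v b)"
    unfolding qfs_def by (rule trans[OF swap3[symmetric]]) (simp add: sum_distrib_left sum_distrib_right)
  also have "\<dots> = (\<Sum>a<d. \<Sum>b<d. if a = b then cnj (v a) * v b else 0)"
    using povm_entries[OF assms] by (intro sum.cong refl) simp
  also have "\<dots> = (\<Sum>a<d. cnj (v a) * v a)" by simp
  finally show ?thesis .
qed

lemma povm_value_le:
  assumes E: "povm d k E"
  shows "(\<Sum>j<k. 1 / real k * Re (mtrace (E j * proj (\<psi> j)))) \<le> 1"
proof -
  have Ep: "\<And>i. i < k \<Longrightarrow> psd d (E i)" using E unfolding povm_def by auto
  have Ec: "\<And>i. i < k \<Longrightarrow> E i \<in> carrier_mat d d" using Ep unfolding psd_def by auto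
  have each: "Re (mtrace (E j * proj (\<psi> j))) \<le> 1" if j: "j < k" for j
  proof -
    let ?v = "\<lambda>a. \<psi> j $ a"
    have nn: "\<And>i. i < k \<Longrightarrow> 0 \<le> Re (qfs d (E i) ?v)" using Ep unfolding psd_iff by blast
    have "Re (qfs d (E j) ?v) \<le> (\<Sum>i<k. Re (qfs d (E i) ?v))"
      by (rule member_le_sum) (use j nn in auto)
    also have "\<dots> = Re (\<Sum>a<d. cnj (?v a) * ?v a)" unfolding qfs_sum_povm[OF E, symmetric] Re_sum ..
    also have "\<dots> = 1" using on[OF j j] by simp
    finally show ?thesis unfolding trace_proj[OF Ec[OF j] j] .
  qed
  have "(\<Sum>j<k. 1 / real k * Re (mtrace (E j * proj (\<psi> j)))) \<le> (\<Sum>j<k. 1 / real k * 1)"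
    by (intro sum_mono mult_left_mono each) auto
  also have "\<dots> = 1" using k1 by simp
  finally show ?thesis .
qed

definition Eo :: "nat \<Rightarrow> complex mat" where
  "Eo j = mat d d (\<lambda>(a,b). proj (\<psi> j) $$ (a,b) + (if j = 0 then Qm $$ (a,b) else 0))"

lemma Eo_povm: "povm d k Eo"
proof -
  have ps: "psd d (Eo j)" if j: "j < k" for j
    by (rule psd_comb[OF psd_proj[OF j] psd_Qm, of 1 "if j = 0 then 1 else 0"]) (auto simp: Eo_def)
  have "mat d d (\<lambda>(a, b). \<Sum>j<k. Eo j $$ (a, b)) = 1\<^sub>m d"
  proof (rule eq_matI)
    fix a b assume ab: "a < dim_row (1\<^sub>m d :: complex mat)" "b < dim_col (1\<^sub>m d :: complex mat)"
    hence ab': "a < d" "b < d" by auto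
    have "(\<Sum>j<k. Eo j $$ (a, b)) = (\<Sum>j<k. \<psi> j $ a * cnj (\<psi> j $ b) + (if j = 0 then Qm $$ (a,b) else 0))"
      using ab' proj_idx by (intro sum.cong refl) (auto simp: Eo_def)
    also have "\<dots> = (\<Sum>j<k. \<psi> j $ a * cnj (\<psi> j $ b)) + Qm $$ (a,b)"
      using k1 by (simp add: sum.distrib)
    also have "\<dots> = (if a = b then 1 else 0)" using ab' unfolding Qm_def by simp
    finally show "mat d d (\<lambda>(a, b). \<Sum>j<k. Eo j $$ (a, b)) $$ (a, b) = 1\<^sub>m d $$ (a, b)"
      using ab' by simp
  qed auto
  thus ?thesis unfolding povm_def using ps by blast
qed

lemma Eo_value: "(\<Sum>j<k. 1 / real k * Re (mtrace (Eo j * proj (\<psi> j)))) = 1"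
proof -
  have each: "Re (mtrace (Eo j * proj (\<psi> j))) = 1" if j: "j < k" for j
  proof -
    let ?v = "\<lambda>a. \<psi> j $ a"
    have Ec: "Eo j \<in> carrier_mat d d" unfolding Eo_def by auto
    have "qfs d (Eo j) ?v = 1 * qfs d (proj (\<psi> j)) ?v + (if j = 0 then 1 else 0) * qfs d Qm ?v"
      by (rule qfs_comb) (use proj_idx[OF j] in \<open>auto simp: Eo_def\<close>)
    also have "qfs d (proj (\<psi> j)) ?v = 1" unfolding qfs_proj[OF j] ip_psi[OF j j] by simp
    also have "qfs d Qm ?v = 0"
    proof -
      have "(\<Sum>i<k. cnj (ip i ?v) * ip i ?v) = (\<Sum>i<k. if i = j then 1 else 0)"
        using ip_psi j by (intro sum.cong refl) auto
      also have "\<dots> = 1" using j by simp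
      finally show ?thesis unfolding qfs_Qm using on[OF j j] by simp
    qed
    finally show ?thesis unfolding trace_proj[OF Ec j] by simp
  qed
  have "(\<Sum>j<k. 1 / real k * Re (mtrace (Eo j * proj (\<psi> j)))) = (\<Sum>j<k. 1 / real k)"
    using each by simp
  also have "\<dots> = 1" using k1 by simp
  finally show ?thesis .
qed

lemma Psuc1: "P_suc d k (\<lambda>_. 1 / real k) (\<lambda>j. proj (\<psi> j)) = 1"
  unfolding P_suc_def
proof (rule cSup_eq_maximum)
  show "1 \<in> {\<Sum>j<k. 1 / real k * Re (mtrace (E j * proj (\<psi> j))) |E. povm d k E}"
    using Eo_value Eo_povm by force
  fix x assume "x \<in> {\<Sum>j<k. 1 / real k * Re (mtrace (E j * proj (\<psi> j))) |E. povm d k E}"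
  thus "x \<le> 1" using povm_value_le by blast
qed

end
lemma blk_sum: fixes g :: "nat \<Rightarrow> 'a::comm_monoid_add" shows "sum g {j*d..<j*d+d} = (\<Sum>a<d. g (j*d+a))"
  using sum.shift_bounds_nat_ivl[of g 0 "j*d" d] by (simp add: atLeast0LessThan add.commute)

lemma sum_blocks: fixes g :: "nat \<Rightarrow> 'a::comm_monoid_add" shows "(\<Sum>j<k. \<Sum>a<d. g (j*d+a)) = (\<Sum>i<k*d. g i)"
  using sum.nat_group[of g d k] by (simp add: blk_sum mult.commute)

lemma sum_block_single:
  fixes g :: "nat \<Rightarrow> 'a::comm_monoid_add"
  assumes j: "j < (k::nat)" and z: "\<And>i. i < k*d \<Longrightarrow> \<not> (j*d \<le> i \<and> i < j*d+d) \<Longrightarrow> g i = 0"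
  shows "(\<Sum>i<k*d. g i) = (\<Sum>a<d. g (j*d+a))"
proof -
  have le: "j*d + d \<le> k*d" using j by (metis Suc_leI add.commute mult_Suc mult_le_mono1)
  have "(\<Sum>i<k*d. g i) = sum g {j*d..<j*d+d}"
    by (rule sum.mono_neutral_right) (use le z in auto)
  thus ?thesis unfolding blk_sum .
qed

lemma robustness_bound:
  assumes D: "psd d D" and Ddiag: "\<And>a b. a < d \<Longrightarrow> b < d \<Longrightarrow> a \<noteq> b \<Longrightarrow> D $$ (a,b) = 0"
    and E: "psd d E" and sig: "\<sigma> \<in> carrier_mat d d"
    and Eq: "\<And>a b. a < d \<Longrightarrow> b < d \<Longrightarrow> E $$ (a,b) = D $$ (a,b) - \<sigma> $$ (a,b)"
    and tr: "(\<Sum>a<d. \<sigma> $$ (a,a)) = 1"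
  shows "0 \<le> robustness d \<sigma> \<and> robustness d \<sigma> \<le> Re (\<Sum>a<d. D $$ (a,a)) - 1"
proof -
  define T where "T = Re (\<Sum>a<d. D $$ (a,a))"
  have Dc: "D \<in> carrier_mat d d" using D unfolding psd_def by auto
  have Ec: "E \<in> carrier_mat d d" using E unfolding psd_def by auto
  have DT: "(\<Sum>a<d. D $$ (a,a)) = complex_of_real T"
  proof -
    have "(\<Sum>a<d. D $$ (a,a)) = (\<Sum>a<d. complex_of_real (Re (D $$ (a,a))))"
      using psd_diag[OF D] by (intro sum.cong refl) auto
    thus ?thesis unfolding T_def by (simp add: Re_sum)
  qed
  have ET: "(\<Sum>a<d. E $$ (a,a)) = complex_of_real T - 1"
    using Eq tr DT by (simp add: sum_subtractf)
  have "0 \<le> Re (\<Sum>a<d. E $$ (a,a))"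
    unfolding Re_sum using psd_diag[OF E] by (intro sum_nonneg) auto
  hence T1: "T \<ge> 1" unfolding ET by simp
  define R where "R = {s. s \<ge> 0 \<and> (\<exists>\<tau>. density d \<tau> \<and>
      incoherent d (complex_of_real (1 / (1 + s)) \<cdot>\<^sub>m (\<sigma> + complex_of_real s \<cdot>\<^sub>m \<tau>)))}"
  have inR: "s \<in> R" if s: "s > T - 1" for s
  proof -
    have s0: "s > 0" using s T1 by simp
    define c where "c = ((1 + s) / T - 1) / s"
    have c0: "c \<ge> 0" unfolding c_def using s0 s T1 by (simp add: field_simps)
    have sc: "s * c + 1 = (1 + s) / T" unfolding c_def using s0 by simp
    define \<tau> where "\<tau> = mat d d (\<lambda>(a,b). complex_of_real c * D $$ (a,b) + complex_of_real (1/s) * E $$ (a,b))"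
    have tc: "\<tau> \<in> carrier_mat d d" unfolding \<tau>_def by simp
    have tpsd: "psd d \<tau>"
      by (rule psd_comb[where x=c and y="1/s", OF D E c0 _ tc]) (use s0 in \<open>auto simp: \<tau>_def\<close>)
    have "(\<Sum>a<d. \<tau> $$ (a,a)) = complex_of_real c * (\<Sum>a<d. D $$ (a,a)) + complex_of_real (1/s) * (\<Sum>a<d. E $$ (a,a))"
      unfolding \<tau>_def by (simp add: sum.distrib sum_distrib_left)
    also have "\<dots> = complex_of_real (c * T + (T - 1) / s)"
      unfolding DT ET by simp
    also have "c * T + (T - 1) / s = 1"
      unfolding c_def using s0 T1 by (simp add: field_simps)
    finally have ttr: "(\<Sum>a<d. \<tau> $$ (a,a)) = 1" by simp
    have tden: "density d \<tau>" unfolding density_def mtrace_eq[OF tc] using tpsd ttr by blast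
    define M where "M = complex_of_real (1 / (1 + s)) \<cdot>\<^sub>m (\<sigma> + complex_of_real s \<cdot>\<^sub>m \<tau>)"
    have Mc: "M \<in> carrier_mat d d" unfolding M_def using sig tc by simp
    have Me: "M $$ (a,b) = complex_of_real (1/T) * D $$ (a,b)" if ab: "a < d" "b < d" for a b
    proof -
      have "M $$ (a,b) = complex_of_real (1 / (1 + s)) * (\<sigma> $$ (a,b) + complex_of_real s *
          (complex_of_real c * D $$ (a,b) + complex_of_real (1/s) * (D $$ (a,b) - \<sigma> $$ (a,b))))"
        unfolding M_def \<tau>_def using ab sig Eq[OF ab] by simp
      also have "\<dots> = complex_of_real (1 / (1 + s)) * (complex_of_real (s * c + 1) * D $$ (a,b))"
        using s0 by (simp add: algebra_simps)
      also have "\<dots> = complex_of_real (1/T) * D $$ (a,b)"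
      proof -
        have nz: "1 + complex_of_real s \<noteq> 0"
        proof
          assume "1 + complex_of_real s = 0"
          hence "Re (1 + complex_of_real s) = 0" by simp
          thus False using s0 by simp
        qed
        show ?thesis unfolding sc using s0 T1 nz by simp
      qed
      finally show ?thesis .
    qed
    have Mpsd: "psd d M"
      by (rule psd_comb[OF D D _ _ Mc, of "1/T" 0]) (use T1 Me in auto)
    have "(\<Sum>a<d. M $$ (a,a)) = complex_of_real (1/T) * (\<Sum>a<d. D $$ (a,a))"
      using Me by (simp add: sum_distrib_left)
    also have "\<dots> = 1" unfolding DT using T1 by simp
    finally have Mtr: "(\<Sum>a<d. M $$ (a,a)) = 1" .
    have Mdiag: "diagonal_mat M" unfolding diagonal_mat_def using Mc Me Ddiag by auto
    have "incoherent d M" unfolding incoherent_def density_def mtrace_eq[OF Mc] using Mpsd Mtr Mdiag by blast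
    thus ?thesis unfolding R_def M_def using tden s0 by auto
  qed
  have ne: "R \<noteq> {}" using inR[of T] by auto
  have lb: "\<And>x. x \<in> R \<Longrightarrow> 0 \<le> x" unfolding R_def by auto
  have bdd: "bdd_below R" unfolding bdd_below_def using lb by blast
  have rob: "robustness d \<sigma> = Inf R" unfolding robustness_def R_def ..
  have "0 \<le> Inf R" using ne lb by (rule cInf_greatest)
  moreover have "Inf R \<le> T - 1"
  proof (rule dense_ge)
    fix y assume "T - 1 < y"
    thus "Inf R \<le> y" using inR bdd by (intro cInf_lower) auto
  qed
  ultimately show ?thesis unfolding rob T_def by simp
qed
lemma psd_block:
  assumes A: "psd (k*d) A" and j: "j < k"
  shows "psd d (mat d d (\<lambda>(a,b). A $$ (j*d+a, j*d+b)))"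
proof -
  let ?B = "mat d d (\<lambda>(a,b). A $$ (j*d+a, j*d+b))"
  have hA: "\<forall>i<k*d. \<forall>i'<k*d. A $$ (i,i') = cnj (A $$ (i',i))" and qA: "\<And>u. Im (qfs (k*d) A u) = 0 \<and> 0 \<le> Re (qfs (k*d) A u)"
    using A unfolding psd_iff by blast+
  have le: "j*d + d \<le> k*d" using j by (metis Suc_leI add.commute mult_Suc mult_le_mono1)
  have h: "\<forall>a<d. \<forall>b<d. ?B $$ (a,b) = cnj (?B $$ (b,a))"
  proof (intro allI impI)
    fix a b assume ab: "a < d" "b < d"
    have i1: "j*d+a < k*d" "j*d+b < k*d" using ab le by auto
    show "?B $$ (a,b) = cnj (?B $$ (b,a))" using ab hA[rule_format, OF i1] by simp
  qed
  have q: "Im (qfs d ?B v) = 0 \<and> 0 \<le> Re (qfs d ?B v)" for v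
  proof -
    define u where "u i = (if j*d \<le> i \<and> i < j*d+d then v (i - j*d) else 0)" for i
    have inner: "(\<Sum>i'<k*d. cnj (u i) * A $$ (i,i') * u i') = (\<Sum>b<d. cnj (u i) * A $$ (i,j*d+b) * v b)" for i
      by (subst sum_block_single[OF j]) (auto simp: u_def)
    have "qfs (k*d) A u = (\<Sum>i<k*d. \<Sum>b<d. cnj (u i) * A $$ (i,j*d+b) * v b)"
      unfolding qfs_def inner ..
    also have "\<dots> = (\<Sum>a<d. \<Sum>b<d. cnj (u (j*d+a)) * A $$ (j*d+a,j*d+b) * v b)"
      by (subst sum_block_single[OF j]) (auto simp: u_def)
    also have "\<dots> = qfs d ?B v"
      unfolding qfs_def by (intro sum.cong refl) (auto simp: u_def)
    finally show ?thesis using qA[of u] by simp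
  qed
  have Bc: "?B \<in> carrier_mat d d" by simp
  show ?thesis unfolding psd_iff using Bc h q by blast
qed

lemma psd_one: "psd n (1\<^sub>m n)"
proof -
  have "qfs n (1\<^sub>m n) v = (\<Sum>a<n. \<Sum>b<n. if a = b then cnj (v a) * v b else 0)" for v
    unfolding qfs_def by (intro sum.cong refl) auto
  hence q: "qfs n (1\<^sub>m n) v = (\<Sum>a<n. cnj (v a) * v a)" for v by simp
  have "0 \<le> Re (\<Sum>a<n. cnj (v a) * v a)" for v
    unfolding Re_sum by (intro sum_nonneg) (simp only: re_cnj_self)
  moreover have "Im (\<Sum>a<n. cnj (v a) * v a) = 0" for v
    unfolding Im_sum by (simp add: mult.commute)
  ultimately show ?thesis unfolding psd_iff q by simp
qed

lemma incoh_id: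
  assumes "d > 0"
  shows "incoherent d (complex_of_real (1 / real d) \<cdot>\<^sub>m 1\<^sub>m d)"
proof -
  let ?M = "complex_of_real (1 / real d) \<cdot>\<^sub>m (1\<^sub>m d :: complex mat)"
  have Mc: "?M \<in> carrier_mat d d" by simp
  have p: "psd d ?M"
    by (rule psd_comb[OF psd_one psd_one, of "1 / real d" 0]) auto
  have "(\<Sum>a<d. ?M $$ (a,a)) = (\<Sum>a<d. complex_of_real (1 / real d))" by simp
  also have "\<dots> = 1" using assms by simp
  finally have tr: "(\<Sum>a<d. ?M $$ (a,a)) = 1" .
  have dg: "diagonal_mat ?M" unfolding diagonal_mat_def by simp
  show ?thesis unfolding incoherent_def density_def mtrace_eq[OF Mc] using p tr dg by blast
qed
context ons begin

lemma d_pos: "d > 0"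
proof (rule ccontr)
  assume "\<not> d > 0"
  hence "d = 0" by simp
  thus False using on[of 0 0] k1 by simp
qed

lemma proj_trace: "j < k \<Longrightarrow> (\<Sum>c<d. proj (\<psi> j) $$ (c,c)) = 1"
  using proj_idx on by (simp add: mult.commute)

definition Cm :: "nat \<Rightarrow> complex mat" where
  "Cm j = mat d d (\<lambda>(a,b). (if a = b then 1 else 0) - \<psi> j $ a * cnj (\<psi> j $ b))"

lemma psd_Cm: "j < k \<Longrightarrow> psd d (Cm j)"
proof -
  assume j: "j < k"
  have Cc: "Cm j \<in> carrier_mat d d" unfolding Cm_def by simp
  have e: "\<And>a b. a < d \<Longrightarrow> b < d \<Longrightarrow> Cm j $$ (a,b) = 1 * (1\<^sub>m d) $$ (a,b) + (-1) * proj (\<psi> j) $$ (a,b)"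
    unfolding Cm_def using proj_idx[OF j] by simp
  have h: "\<forall>a<d. \<forall>b<d. Cm j $$ (a,b) = cnj (Cm j $$ (b,a))"
    unfolding Cm_def by (simp add: mult.commute)
  have q: "Im (qfs d (Cm j) v) = 0 \<and> 0 \<le> Re (qfs d (Cm j) v)" for v
  proof -
    have eq: "qfs d (Cm j) v = 1 * qfs d (1\<^sub>m d) v + (-1) * qfs d (proj (\<psi> j)) v"
      by (rule qfs_comb) (rule e)
    have q1: "qfs d (1\<^sub>m d) v = (\<Sum>a<d. cnj (v a) * v a)"
    proof -
      have "qfs d (1\<^sub>m d) v = (\<Sum>a<d. \<Sum>b<d. if a = b then cnj (v a) * v b else 0)"
        unfolding qfs_def by (intro sum.cong refl) auto
      thus ?thesis by simp
    qed
    have "Re (cnj (ip j v) * ip j v) \<le> (\<Sum>i<k. Re (cnj (ip i v) * ip i v))"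
      by (rule member_le_sum) (use j re_cnj_self in auto)
    also have "\<dots> \<le> (\<Sum>a<d. Re (cnj (v a) * v a))" by (rule bessel)
    finally have b: "Re (cnj (ip j v) * ip j v) \<le> (\<Sum>a<d. Re (cnj (v a) * v a))" .
    have i0: "Im (\<Sum>a<d. cnj (v a) * v a) = 0" unfolding Im_sum by (simp add: mult.commute)
    show ?thesis unfolding eq q1 qfs_proj[OF j] using b i0 by (simp add: Re_sum mult.commute)
  qed
  show ?thesis unfolding psd_iff using Cc h q by blast
qed

lemma upper:
  assumes mio: "MIO d (k*d) Ks"
    and cons: "(\<Sum>j<k. 1 / real k * Re (block_weight d j (apply_channel (k*d) Ks (proj (\<psi> j))))) = 1"
  shows "0 \<le> (\<Sum>j<k. 1 / real k * robustness d (ptrace_B k d (apply_channel (k*d) Ks (proj (\<psi> j)))))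
    \<and> (\<Sum>j<k. 1 / real k * robustness d (ptrace_B k d (apply_channel (k*d) Ks (proj (\<psi> j))))) \<le> real d / real k - 1"
proof -
  define m where "m = k*d"
  have kc: "kraus_channel d m Ks" using mio unfolding MIO_def m_def by blast
  have Ks: "\<forall>K\<in>set Ks. K \<in> carrier_mat m d" using kc unfolding kraus_channel_def by blast
  define N where "N = apply_channel m Ks"
  define X where "X j = N (proj (\<psi> j))" for j
  define Y where "Y = N (1\<^sub>m d)"
  have Xpsd: "psd m (X j)" if "j < k" for j unfolding X_def N_def by (rule channel_psd[OF Ks psd_proj[OF that]])
  have Xc: "X j \<in> carrier_mat m m" if "j < k" for j using Xpsd[OF that] unfolding psd_def by blast
  have Xtr: "(\<Sum>r<m. X j $$ (r,r)) = 1" if j: "j < k" for j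
    unfolding X_def N_def channel_trace[OF kc proj_car[OF j]] proj_trace[OF j] ..
  have Xdiag: "X j $$ (r,r) = complex_of_real (Re (X j $$ (r,r))) \<and> 0 \<le> Re (X j $$ (r,r))" if "j < k" "r < m" for j r
    using psd_diag[OF Xpsd] that by blast
  define bw where "bw j = (\<Sum>a<d. X j $$ (j*d+a, j*d+a))" for j
  have le: "j*d + d \<le> m" if "j < k" for j unfolding m_def using that by (metis Suc_leI add.commute mult_Suc mult_le_mono1)
  have bwsplit: "(\<Sum>r<m. Re (X j $$ (r,r))) = Re (bw j) + (\<Sum>r\<in>{..<m} - {j*d..<j*d+d}. Re (X j $$ (r,r)))" if j: "j < k" for j
  proof -
    have sub: "{j*d..<j*d+d} \<subseteq> {..<m}" using le[OF j] by auto
    have "(\<Sum>r<m. Re (X j $$ (r,r))) = (\<Sum>r\<in>{j*d..<j*d+d}. Re (X j $$ (r,r))) + (\<Sum>r\<in>{..<m} - {j*d..<j*d+d}. Re (X j $$ (r,r)))"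
      using sum.subset_diff[OF sub, of "\<lambda>r. Re (X j $$ (r,r))"] by simp
    also have "(\<Sum>r\<in>{j*d..<j*d+d}. Re (X j $$ (r,r))) = Re (bw j)"
      unfolding bw_def blk_sum[of "\<lambda>r. Re (X j $$ (r,r))"] Re_sum ..
    finally show ?thesis .
  qed
  have restnn: "0 \<le> (\<Sum>r\<in>{..<m} - {j*d..<j*d+d}. Re (X j $$ (r,r)))" if j: "j < k" for j
    using Xdiag[OF j] by (intro sum_nonneg) auto
  have Xtr1: "(\<Sum>r<m. Re (X j $$ (r,r))) = 1" if j: "j < k" for j
    using Xtr[OF j] by (metis Re_sum one_complex.simps(1))
  have bwle: "Re (bw j) \<le> 1" if j: "j < k" for j using bwsplit[OF j] restnn[OF j] Xtr1[OF j] by simp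
  have cons': "(\<Sum>j<k. 1 / real k * Re (bw j)) = 1"
  proof -
    have "block_weight d j (apply_channel (k*d) Ks (proj (\<psi> j))) = bw j" for j
      unfolding block_weight_def bw_def X_def N_def m_def ..
    thus ?thesis using cons by simp
  qed
  have bw1: "Re (bw j) = 1" if j: "j < k" for j
  proof -
    have "(\<Sum>j<k. 1 / real k * (1 - Re (bw j))) = (\<Sum>j<k. 1 / real k) - (\<Sum>j<k. 1 / real k * Re (bw j))"
      by (simp add: sum_subtractf right_diff_distrib)
    also have "\<dots> = 0" unfolding cons' using k1 by simp
    finally have z: "(\<Sum>j<k. 1 / real k * (1 - Re (bw j))) = 0" .
    have "\<forall>i\<in>{..<k}. 1 / real k * (1 - Re (bw i)) = 0"
      by (rule iffD1[OF sum_nonneg_eq_0_iff z]) (use bwle in auto)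
    hence "1 / real k * (1 - Re (bw j)) = 0" using j by auto
    thus ?thesis using k1 by simp
  qed
  have rest0: "(\<Sum>r\<in>{..<m} - {j*d..<j*d+d}. Re (X j $$ (r,r))) = 0" if j: "j < k" for j
    using bwsplit[OF j] Xtr1[OF j] bw1[OF j] by simp
  have Xzero: "X j $$ (r,s) = 0" if j: "j < k" and r: "r < m" "\<not> (j*d \<le> r \<and> r < j*d+d)" and s: "s < m" for j r s
  proof -
    have "\<forall>r\<in>{..<m} - {j*d..<j*d+d}. Re (X j $$ (r,r)) = 0"
      by (rule iffD1[OF sum_nonneg_eq_0_iff rest0[OF j]]) (use Xdiag[OF j] in auto)
    hence "Re (X j $$ (r,r)) = 0" using r by auto
    hence "X j $$ (r,r) = 0" using Xdiag[OF j r(1)] by (metis of_real_0)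
    thus ?thesis by (rule psd_zero_row[OF Xpsd[OF j] r(1) s, rotated])
  qed
  define \<sigma> where "\<sigma> j = ptrace_B k d (N (proj (\<psi> j)))" for j
  have sigc: "\<sigma> j \<in> carrier_mat d d" for j unfolding \<sigma>_def ptrace_B_def by simp
  have sige: "\<sigma> j $$ (a,b) = X j $$ (j*d+a, j*d+b)" if j: "j < k" and ab: "a < d" "b < d" for j a b
  proof -
    have "\<sigma> j $$ (a,b) = (\<Sum>i<k. X j $$ (i*d+a, i*d+b))"
      unfolding \<sigma>_def ptrace_B_def X_def using ab by simp
    also have "\<dots> = (\<Sum>i<k. if i = j then X j $$ (j*d+a, j*d+b) else 0)"
    proof (intro sum.cong refl)
      fix i assume i: "i \<in> {..<k}"
      show "X j $$ (i*d+a, i*d+b) = (if i = j then X j $$ (j*d+a, j*d+b) else 0)"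
      proof (cases "i = j")
        case False
        have lei: "i*d + d \<le> m" using le i by auto
        have r: "i*d+a < m" "i*d+b < m" using lei ab by auto
        have nb: "\<not> (j*d \<le> i*d+a \<and> i*d+a < j*d+d)"
        proof
          assume "j*d \<le> i*d+a \<and> i*d+a < j*d+d"
          hence "j*d < (i+1)*d" "i*d < (j+1)*d" using ab by auto
          hence "j < i+1" "i < j+1" using mult_less_cancel2 by blast+
          thus False using False by simp
        qed
        show ?thesis using Xzero[OF j r(1) nb r(2)] False by simp
      qed simp
    qed
    also have "\<dots> = X j $$ (j*d+a, j*d+b)" using j by simp
    finally show ?thesis .
  qed
  have sigtr: "(\<Sum>a<d. \<sigma> j $$ (a,a)) = 1" if j: "j < k" for j
  proof -
    have "(\<Sum>a<d. \<sigma> j $$ (a,a)) = bw j" unfolding bw_def using sige[OF j] by simp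
    also have "bw j = complex_of_real (Re (bw j))"
    proof -
      have "bw j = (\<Sum>a<d. complex_of_real (Re (X j $$ (j*d+a, j*d+a))))"
        unfolding bw_def using Xdiag[OF j] le[OF j] by (intro sum.cong refl) (metis add_less_cancel_left lessThan_iff order_less_le_trans)
      thus ?thesis by (simp add: Re_sum)
    qed
    finally show ?thesis using bw1[OF j] by simp
  qed
  \<comment> \<open>the incoherent output of the maximally mixed state\<close>
  have Yc: "Y \<in> carrier_mat m m" unfolding Y_def N_def by (rule channel_carrier[OF Ks]) simp
  have Ydiag: "Y $$ (r,s) = 0" if "r < m" "s < m" "r \<noteq> s" for r s
  proof -
    define Z where "Z = N (complex_of_real (1 / real d) \<cdot>\<^sub>m 1\<^sub>m d)"
    have "incoherent m Z" unfolding Z_def N_def m_def using mio incoh_id[OF d_pos] unfolding MIO_def by blast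
    hence Zc: "Z \<in> carrier_mat m m" and Zd: "diagonal_mat Z" unfolding incoherent_def density_def psd_def by blast+
    have "Y $$ (r,s) = complex_of_real (real d) * Z $$ (r,s) + 0 * Z $$ (r,s)"
      unfolding Y_def Z_def N_def
      by (rule channel_lin[OF Ks _ _ _ _ that(1,2)]) (use d_pos in auto)
    thus ?thesis using Zd Zc that unfolding diagonal_mat_def by simp
  qed
  have Ytr: "(\<Sum>r<m. Y $$ (r,r)) = of_nat d"
    unfolding Y_def N_def channel_trace[OF kc one_carrier_mat] by simp
  define W where "W j = N (Cm j)" for j
  have Wpsd: "psd m (W j)" if "j < k" for j unfolding W_def N_def by (rule channel_psd[OF Ks psd_Cm[OF that]])
  have We: "W j $$ (r,s) = Y $$ (r,s) - X j $$ (r,s)" if j: "j < k" and rs: "r < m" "s < m" for j r s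
  proof -
    have "W j $$ (r,s) = 1 * Y $$ (r,s) + (-1) * X j $$ (r,s)"
      unfolding W_def Y_def X_def N_def
      by (rule channel_lin[OF Ks _ _ _ _ rs]) (use proj_car[OF j] proj_idx[OF j] in \<open>auto simp: Cm_def\<close>)
    thus ?thesis by simp
  qed
  define T where "T j = Re (\<Sum>a<d. Y $$ (j*d+a, j*d+a))" for j
  have rb: "0 \<le> robustness d (\<sigma> j) \<and> robustness d (\<sigma> j) \<le> T j - 1" if j: "j < k" for j
  proof -
    let ?D = "mat d d (\<lambda>(a,b). Y $$ (j*d+a, j*d+b))"
    let ?E = "mat d d (\<lambda>(a,b). W j $$ (j*d+a, j*d+b))"
    have Ypsd: "psd m Y" unfolding Y_def N_def by (rule channel_psd[OF Ks psd_one])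
    have Dp: "psd d ?D" using psd_block[OF Ypsd[unfolded m_def] j] .
    have Ep: "psd d ?E" using psd_block[OF Wpsd[OF j, unfolded m_def] j] .
    have idx: "j*d+a < m" if "a < d" for a using le[OF j] that by simp
    have "0 \<le> robustness d (\<sigma> j) \<and> robustness d (\<sigma> j) \<le> Re (\<Sum>a<d. ?D $$ (a,a)) - 1"
    proof (rule robustness_bound[OF Dp _ Ep sigc])
      show "\<And>a b. a < d \<Longrightarrow> b < d \<Longrightarrow> a \<noteq> b \<Longrightarrow> ?D $$ (a,b) = 0"
        using Ydiag idx by simp
      show "\<And>a b. a < d \<Longrightarrow> b < d \<Longrightarrow> ?E $$ (a,b) = ?D $$ (a,b) - \<sigma> j $$ (a,b)"
        using We[OF j] idx sige[OF j] by simp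
      show "(\<Sum>a<d. \<sigma> j $$ (a,a)) = 1" by (rule sigtr[OF j])
    qed
    moreover have "(\<Sum>a<d. ?D $$ (a,a)) = (\<Sum>a<d. Y $$ (j*d+a, j*d+a))" by simp
    ultimately show ?thesis unfolding T_def by simp
  qed
  have Tsum: "(\<Sum>j<k. T j) = real d"
  proof -
    have "(\<Sum>j<k. T j) = Re (\<Sum>j<k. \<Sum>a<d. Y $$ (j*d+a, j*d+a))" unfolding T_def Re_sum ..
    also have "(\<Sum>j<k. \<Sum>a<d. Y $$ (j*d+a, j*d+a)) = (\<Sum>r<m. Y $$ (r,r))"
      unfolding m_def by (rule sum_blocks)
    finally show ?thesis unfolding Ytr by simp
  qed
  have eqv: "(\<Sum>j<k. 1 / real k * robustness d (ptrace_B k d (apply_channel (k*d) Ks (proj (\<psi> j)))))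
      = (\<Sum>j<k. 1 / real k * robustness d (\<sigma> j))" unfolding \<sigma>_def N_def m_def ..
  have "0 \<le> (\<Sum>j<k. 1 / real k * robustness d (\<sigma> j))"
    using rb by (intro sum_nonneg) auto
  moreover have "(\<Sum>j<k. 1 / real k * robustness d (\<sigma> j)) \<le> (\<Sum>j<k. 1 / real k * (T j - 1))"
    using rb by (intro sum_mono mult_left_mono) auto
  moreover have "(\<Sum>j<k. 1 / real k * (T j - 1)) = real d / real k - 1"
  proof -
    have "(\<Sum>j<k. 1 / real k * (T j - 1)) = 1 / real k * ((\<Sum>j<k. T j) - real k)"
      unfolding sum_distrib_left[symmetric] sum_subtractf by simp
    also have "\<dots> = real d / real k - 1" unfolding Tsum using k1 by (simp add: field_simps)
    finally show ?thesis .
  qed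
  ultimately show ?thesis unfolding eqv by linarith
qed

end
lemma kraus_foldr_entry:
  assumes car: "\<forall>K\<in>set Ks. K \<in> carrier_mat m n"
  shows "foldr (\<lambda>K acc. mat_adjoint K * K + acc) Ks (0\<^sub>m n n) \<in> carrier_mat n n \<and>
     (\<forall>c<n. \<forall>c'<n. foldr (\<lambda>K acc. mat_adjoint K * K + acc) Ks (0\<^sub>m n n) $$ (c,c') =
       (\<Sum>K\<leftarrow>Ks. \<Sum>r<m. cnj (K $$ (r,c)) * K $$ (r,c')))"
  using car
proof (induction Ks)
  case Nil
  then show ?case by auto
next
  case (Cons K Ks)
  have K: "K \<in> carrier_mat m n" using Cons by auto
  have e1: "(mat_adjoint K * K) $$ (c,c') = (\<Sum>r<m. cnj (K $$ (r,c)) * K $$ (r,c'))" if "c < n" "c' < n" for c c'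
    using K adj_carrier[OF K] adj_index[OF K] that
    by (auto simp: times_mat_def scalar_prod_def row_def col_def atLeast0LessThan intro!: sum.cong)
  show ?case using Cons e1 K adj_carrier[OF K] by auto
qed

lemma sum_list_upt1: "sum_list (map h [0..<n]) = (\<Sum>i<n. h i)"
  by (simp add: interv_sum_list_conv_sum_set_nat atLeast0LessThan)

context ons begin

lemma Qm_idx: "a < d \<Longrightarrow> b < d \<Longrightarrow> Qm $$ (a,b) = (if a = b then 1 else 0) - (\<Sum>i<k. \<psi> i $ a * cnj (\<psi> i $ b))"
  unfolding Qm_def by simp

lemma Qm_idem:
  assumes c: "c < d" and c': "c' < d"
  shows "(\<Sum>a<d. cnj (Qm $$ (a,c)) * Qm $$ (a,c')) = Qm $$ (c,c')"
proof -
  define W where "W a = (\<Sum>i<k. cnj (\<psi> i $ a) * \<psi> i $ c)" for a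
  define V where "V a = (\<Sum>j<k. \<psi> j $ a * cnj (\<psi> j $ c'))" for a
  define Pi where "Pi = (\<Sum>i<k. \<psi> i $ c * cnj (\<psi> i $ c'))"
  have "(\<Sum>a<d. cnj (Qm $$ (a,c)) * Qm $$ (a,c')) =
        (\<Sum>a<d. ((if a = c then 1 else 0) - W a) * ((if a = c' then 1 else 0) - V a))"
    using c c' by (intro sum.cong refl) (simp add: Qm_idx W_def V_def cnj_sum mult.commute)
  also have "\<dots> = (\<Sum>a<d. (if a = c then 1 else 0) * (if a = c' then 1 else 0)) - (\<Sum>a<d. (if a = c then V a else 0))
        - (\<Sum>a<d. (if a = c' then W a else 0)) + (\<Sum>a<d. W a * V a)"
  proof -
    have pt: "\<And>a. ((if a = c then 1 else 0) - W a) * ((if a = c' then 1 else 0) - V a) =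
      (if a = c then 1 else 0) * (if a = c' then 1 else 0) - (if a = c then V a else 0) - (if a = c' then W a else 0) + W a * V a"
      by (simp add: algebra_simps)
    show ?thesis by (simp only: pt sum.distrib sum_subtractf)
  qed
  also have "(\<Sum>a<d. (if a = c then 1 else 0) * (if a = c' then 1 else (0::complex))) = (if c = c' then 1 else 0)"
    using c by (simp add: if_distrib[of "\<lambda>x. x * _"] cong: if_cong)
  also have "(\<Sum>a<d. (if a = c then V a else 0)) = Pi" using c unfolding V_def Pi_def by simp
  also have "(\<Sum>a<d. (if a = c' then W a else 0)) = Pi" using c' unfolding W_def Pi_def by (simp add: mult.commute)
  also have "(\<Sum>a<d. W a * V a) = Pi"
  proof -
    have "(\<Sum>a<d. W a * V a) = (\<Sum>a<d. \<Sum>i<k. \<Sum>j<k. (\<psi> i $ c * cnj (\<psi> j $ c')) * (cnj (\<psi> i $ a) * \<psi> j $ a))"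
      unfolding W_def V_def sum_product by (intro sum.cong refl) (simp add: mult_ac)
    also have "\<dots> = (\<Sum>i<k. \<Sum>j<k. \<Sum>a<d. (\<psi> i $ c * cnj (\<psi> j $ c')) * (cnj (\<psi> i $ a) * \<psi> j $ a))"
      by (rule trans[OF swap3], rule swap3)
    also have "\<dots> = (\<Sum>i<k. \<Sum>j<k. (\<psi> i $ c * cnj (\<psi> j $ c')) * (if i = j then 1 else 0))"
      by (intro sum.cong refl) (simp add: sum_distrib_left[symmetric] on)
    also have "\<dots> = Pi" unfolding Pi_def by (simp add: if_distrib[of "\<lambda>x. _ * x"] cong: if_cong)
    finally show ?thesis .
  qed
  finally show ?thesis using c c' unfolding Qm_idx[OF c c'] Pi_def by simp
qed

lemma Qm_psi: "a < d \<Longrightarrow> j < k \<Longrightarrow> (\<Sum>c<d. Qm $$ (a,c) * \<psi> j $ c) = 0"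
proof -
  assume a: "a < d" and j: "j < k"
  have "(\<Sum>c<d. Qm $$ (a,c) * \<psi> j $ c) = (\<Sum>c<d. (if a = c then \<psi> j $ c else 0)) -
      (\<Sum>c<d. \<Sum>i<k. \<psi> i $ a * (cnj (\<psi> i $ c) * \<psi> j $ c))"
  proof -
    have "(\<Sum>c<d. Qm $$ (a,c) * \<psi> j $ c) = (\<Sum>c<d. (if a = c then \<psi> j $ c else 0) - (\<Sum>i<k. \<psi> i $ a * (cnj (\<psi> i $ c) * \<psi> j $ c)))"
      by (intro sum.cong refl) (simp add: Qm_idx a left_diff_distrib right_diff_distrib sum_distrib_right sum_distrib_left mult_ac)
    thus ?thesis by (simp only: sum_subtractf)
  qed
  also have "(\<Sum>c<d. \<Sum>i<k. \<psi> i $ a * (cnj (\<psi> i $ c) * \<psi> j $ c)) = (\<Sum>i<k. \<psi> i $ a * (if i = j then 1 else 0))"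
    by (subst sum.swap) (simp add: sum_distrib_left[symmetric] on j)
  finally show ?thesis using a j by (simp add: if_distrib[of "\<lambda>x. _ * x"] cong: if_cong)
qed

definition Kc :: "nat \<Rightarrow> complex mat" where
  "Kc j = mat (k*d) d (\<lambda>(r,c). if r = j*d then cnj (\<psi> j $ c) else 0)"
definition Lc :: "nat \<Rightarrow> complex mat" where
  "Lc a = mat (k*d) d (\<lambda>(r,c). if r = 0 then Qm $$ (a,c) else 0)"
definition Ko :: "complex mat list" where
  "Ko = map Kc [0..<k] @ map Lc [0..<d]"

lemma Ko_car: "\<forall>K\<in>set Ko. K \<in> carrier_mat (k*d) d"
  unfolding Ko_def Kc_def Lc_def by auto

lemma jd_lt: "j < k \<Longrightarrow> j*d < k*d"
  using d_pos by simp

lemma Ko_sum: "(\<Sum>K\<leftarrow>Ko. g K) = (\<Sum>j<k. g (Kc j)) + (\<Sum>a<d. g (Lc a))"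
  unfolding Ko_def by (simp add: sum_list_upt1 comp_def)

lemma Ko_kraus: "kraus_channel d (k*d) Ko"
proof -
  have F: "foldr (\<lambda>K acc. mat_adjoint K * K + acc) Ko (0\<^sub>m d d) = 1\<^sub>m d"
  proof (rule eq_matI)
    fix c c' assume cc: "c < dim_row (1\<^sub>m d :: complex mat)" "c' < dim_col (1\<^sub>m d :: complex mat)"
    hence c: "c < d" and c': "c' < d" by auto
    have kj: "(\<Sum>r<k*d. cnj (Kc j $$ (r,c)) * Kc j $$ (r,c')) = \<psi> j $ c * cnj (\<psi> j $ c')" if j: "j < k" for j
    proof -
      have "(\<Sum>r<k*d. cnj (Kc j $$ (r,c)) * Kc j $$ (r,c')) = (\<Sum>r<k*d. if r = j*d then \<psi> j $ c * cnj (\<psi> j $ c') else 0)"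
        using c c' by (intro sum.cong refl) (auto simp: Kc_def)
      thus ?thesis using jd_lt[OF j] by simp
    qed
    have la: "(\<Sum>r<k*d. cnj (Lc a $$ (r,c)) * Lc a $$ (r,c')) = cnj (Qm $$ (a,c)) * Qm $$ (a,c')" if a: "a < d" for a
    proof -
      have "(\<Sum>r<k*d. cnj (Lc a $$ (r,c)) * Lc a $$ (r,c')) = (\<Sum>r<k*d. if r = 0 then cnj (Qm $$ (a,c)) * Qm $$ (a,c') else 0)"
        using c c' by (intro sum.cong refl) (auto simp: Lc_def)
      thus ?thesis using jd_lt[of 0] k1 by simp
    qed
    have "foldr (\<lambda>K acc. mat_adjoint K * K + acc) Ko (0\<^sub>m d d) $$ (c,c') =
        (\<Sum>K\<leftarrow>Ko. \<Sum>r<k*d. cnj (K $$ (r,c)) * K $$ (r,c'))"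
      using kraus_foldr_entry[OF Ko_car] c c' by blast
    also have "\<dots> = (\<Sum>j<k. \<psi> j $ c * cnj (\<psi> j $ c')) + (\<Sum>a<d. cnj (Qm $$ (a,c)) * Qm $$ (a,c'))"
      unfolding Ko_sum using kj la by simp
    also have "\<dots> = (if c = c' then 1 else 0)"
      unfolding Qm_idem[OF c c'] Qm_idx[OF c c'] by simp
    finally show "foldr (\<lambda>K acc. mat_adjoint K * K + acc) Ko (0\<^sub>m d d) $$ (c,c') = 1\<^sub>m d $$ (c,c')"
      using c c' by simp
  qed (use kraus_foldr_entry[OF Ko_car] in auto)
  thus ?thesis unfolding kraus_channel_def using Ko_car by blast
qed

lemma Ko_row: "K \<in> set Ko \<Longrightarrow> \<exists>r0. \<forall>r c. r \<noteq> r0 \<longrightarrow> r < k*d \<longrightarrow> c < d \<longrightarrow> K $$ (r,c) = 0"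
  unfolding Ko_def Kc_def Lc_def by auto

lemma Ko_MIO: "MIO d (k*d) Ko"
  unfolding MIO_def
proof (intro conjI allI impI)
  show kc: "kraus_channel d (k*d) Ko" by (rule Ko_kraus)
  fix \<rho> assume inc: "incoherent d \<rho>"
  hence rp: "psd d \<rho>" and rt: "mtrace \<rho> = 1" unfolding incoherent_def density_def by blast+
  have rc: "\<rho> \<in> carrier_mat d d" using rp unfolding psd_def by blast
  let ?N = "apply_channel (k*d) Ko \<rho>"
  have Nc: "?N \<in> carrier_mat (k*d) (k*d)" by (rule channel_carrier[OF Ko_car rc])
  have Np: "psd (k*d) ?N" by (rule channel_psd[OF Ko_car rp])
  have Nt: "mtrace ?N = 1"
    unfolding mtrace_eq[OF Nc] channel_trace[OF kc rc] using rt mtrace_eq[OF rc] by simp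
  have Nd: "diagonal_mat ?N" unfolding diagonal_mat_def
  proof (intro allI impI)
    fix r s assume r: "r < dim_row ?N" and s: "s < dim_col ?N" and rs: "r \<noteq> s"
    have r': "r < k*d" and s': "s < k*d" using r s Nc by auto
    have "?N $$ (r,s) = (\<Sum>K\<leftarrow>Ko. \<Sum>c<d. \<Sum>c'<d. K $$ (r,c) * \<rho> $$ (c,c') * cnj (K $$ (s,c')))"
      using channel_entry[OF Ko_car rc] r' s' by blast
    also have "\<dots> = (\<Sum>K\<leftarrow>Ko. 0)"
    proof (rule arg_cong[where f=sum_list], rule map_cong[OF refl])
      fix K assume K: "K \<in> set Ko"
      obtain r0 where r0: "\<forall>r c. r \<noteq> r0 \<longrightarrow> r < k*d \<longrightarrow> c < d \<longrightarrow> K $$ (r,c) = 0" using Ko_row[OF K] by blast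
      have z: "K $$ (r,c) * \<rho> $$ (c,c') * cnj (K $$ (s,c')) = 0" if "c < d" "c' < d" for c c'
        using r0 that r' s' rs by (cases "r = r0") auto
      show "(\<Sum>c<d. \<Sum>c'<d. K $$ (r,c) * \<rho> $$ (c,c') * cnj (K $$ (s,c'))) = 0"
        by (auto intro!: sum.neutral simp: z)
    qed
    finally show "?N $$ (r,s) = 0" by simp
  qed
  show "incoherent (k*d) ?N" unfolding incoherent_def density_def using Np Nt Nd by blast
qed

lemma row_proj:
  assumes j: "j < k"
  shows "(\<Sum>c<d. \<Sum>c'<d. K $$ (r,c) * proj (\<psi> j) $$ (c,c') * cnj (K $$ (r,c'))) =
     (\<Sum>c<d. K $$ (r,c) * \<psi> j $ c) * cnj (\<Sum>c<d. K $$ (r,c) * \<psi> j $ c)"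
  unfolding cnj_sum sum_product using proj_idx[OF j] by (intro sum.cong refl) (simp add: mult_ac)

lemma Ko_diag:
  assumes j: "j < k" and r: "r < k*d"
  shows "apply_channel (k*d) Ko (proj (\<psi> j)) $$ (r,r) = (if r = j*d then 1 else 0)"
proof -
  have "apply_channel (k*d) Ko (proj (\<psi> j)) $$ (r,r) =
      (\<Sum>K\<leftarrow>Ko. (\<Sum>c<d. K $$ (r,c) * \<psi> j $ c) * cnj (\<Sum>c<d. K $$ (r,c) * \<psi> j $ c))"
    using channel_entry[OF Ko_car proj_car[OF j]] r row_proj[OF j] by simp
  also have "\<dots> = (\<Sum>i<k. if r = i*d \<and> i = j then 1 else 0) + (\<Sum>a<d. 0)"
    unfolding Ko_sum
  proof (intro arg_cong2[where f="(+)"] sum.cong refl)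
    fix i assume i: "i \<in> {..<k}"
    have "(\<Sum>c<d. Kc i $$ (r,c) * \<psi> j $ c) = (if r = i*d then (if i = j then 1 else 0) else 0)"
      using r on[of i j] i j by (simp add: Kc_def)
    thus "(\<Sum>c<d. Kc i $$ (r,c) * \<psi> j $ c) * cnj (\<Sum>c<d. Kc i $$ (r,c) * \<psi> j $ c) = (if r = i*d \<and> i = j then 1 else 0)"
      by simp
  next
    fix a assume a: "a \<in> {..<d}"
    have "(\<Sum>c<d. Lc a $$ (r,c) * \<psi> j $ c) = 0"
      using r Qm_psi[of a j] a j by (cases "r = 0") (auto simp: Lc_def)
    thus "(\<Sum>c<d. Lc a $$ (r,c) * \<psi> j $ c) * cnj (\<Sum>c<d. Lc a $$ (r,c) * \<psi> j $ c) = 0" by simp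
  qed
  also have "\<dots> = (if r = j*d then 1 else 0)"
  proof -
    have "(\<Sum>i<k. if r = i*d \<and> i = j then 1 else (0::complex)) = (\<Sum>i<k. if i = j then (if r = j*d then 1 else 0) else 0)"
      by (intro sum.cong refl) auto
    thus ?thesis using j by simp
  qed
  finally show ?thesis .
qed

lemma Ko_cons: "(\<Sum>j<k. 1 / real k * Re (block_weight d j (apply_channel (k*d) Ko (proj (\<psi> j))))) = 1"
proof -
  have bw: "block_weight d j (apply_channel (k*d) Ko (proj (\<psi> j))) = 1" if j: "j < k" for j
  proof -
    have lt: "j*d + a < k*d" if "a < d" for a
    proof -
      have "j*d + d \<le> k*d" using j by (metis Suc_leI add.commute mult_Suc mult_le_mono1)
      thus ?thesis using that by linarith
    qed
    have "block_weight d j (apply_channel (k*d) Ko (proj (\<psi> j))) = (\<Sum>a<d. if a = 0 then 1 else 0)"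
      unfolding block_weight_def using Ko_diag[OF j lt] by (intro sum.cong refl) auto
    thus ?thesis using d_pos by simp
  qed
  have "(\<Sum>j<k. 1 / real k * Re (block_weight d j (apply_channel (k*d) Ko (proj (\<psi> j))))) = (\<Sum>j<k. 1 / real k)"
    using bw by simp
  thus ?thesis using k1 by simp
qed

end



lemma mtrace_comm:
  assumes X: "X \<in> carrier_mat n n" and Y: "Y \<in> carrier_mat n n"
  shows "mtrace (X * Y) = mtrace (Y * X)"
proof -
  have "mtrace (X * Y) = (\<Sum>i<n. \<Sum>j<n. X $$ (i,j) * Y $$ (j,i))"
    unfolding mtrace_eq[OF mult_carrier_mat[OF X Y]] using X Y
    by (intro sum.cong refl) (simp add: scalar_prod_def row_def col_def atLeast0LessThan)
  also have "\<dots> = (\<Sum>j<n. \<Sum>i<n. Y $$ (j,i) * X $$ (i,j))"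
    by (subst sum.swap) (simp add: mult.commute)
  also have "\<dots> = mtrace (Y * X)"
    unfolding mtrace_eq[OF mult_carrier_mat[OF Y X]] using X Y
    by (intro sum.cong refl) (simp add: scalar_prod_def row_def col_def atLeast0LessThan)
  finally show ?thesis .
qed

lemma mtrace_similar:
  assumes "similar_mat A B"
  shows "mtrace A = mtrace B"
proof -
  obtain n P Q where c: "{A,B,P,Q} \<subseteq> carrier_mat n n" and PQ: "P * Q = 1\<^sub>m n" and QP: "Q * P = 1\<^sub>m n"
    and A: "A = P * B * Q" using similar_matD[OF assms] by blast
  have Pc: "P \<in> carrier_mat n n" and Bc: "B \<in> carrier_mat n n" and Qc: "Q \<in> carrier_mat n n" using c by auto
  have "mtrace A = mtrace (Q * (P * B))" unfolding A
    by (rule mtrace_comm) (use Pc Bc Qc in auto)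
  also have "Q * (P * B) = (Q * P) * B" using Pc Bc Qc by (simp add: assoc_mult_mat)
  also have "\<dots> = B" unfolding QP using Bc by simp
  finally show ?thesis .
qed

lemma proots_linear_prod: "proots (\<Prod>a\<leftarrow>xs. [:- a, 1:]) = mset (xs :: complex list)"
proof (induction xs)
  case Nil
  then show ?case by simp
next
  case (Cons x xs)
  have nz: "(\<Prod>a\<leftarrow>xs. [:- a, 1:]) \<noteq> (0 :: complex poly)"
    by (auto simp: prod_list_zero_iff)
  have eq: "(\<Prod>a\<leftarrow>x # xs. [:- a, 1:]) = [:- x, 1:] * (\<Prod>a\<leftarrow>xs. [:- a, 1:])" by simp
  have nz1: "[:- x, 1:] \<noteq> (0 :: complex poly)" by simp
  have "proots (\<Prod>a\<leftarrow>x # xs. [:- a, 1:]) = proots [:- x, 1:] + proots (\<Prod>a\<leftarrow>xs. [:- a, 1:])"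
    unfolding eq by (rule proots_mult[OF nz1 nz])
  thus ?case using Cons by simp
qed

context ons begin

definition Mavg :: "complex mat" where
  "Mavg = mat d d (\<lambda>(a, b). \<Sum>j<k. complex_of_real (1 / real k) * proj (\<psi> j) $$ (a, b))"

lemma Mavg_car: "Mavg \<in> carrier_mat d d" unfolding Mavg_def by simp

lemma Mavg_idx: "a < d \<Longrightarrow> b < d \<Longrightarrow> Mavg $$ (a,b) = complex_of_real (1 / real k) * (\<Sum>j<k. \<psi> j $ a * cnj (\<psi> j $ b))"
  unfolding Mavg_def using proj_idx by (simp add: sum_distrib_left)

lemma Pi_sq: "a < d \<Longrightarrow> b < d \<Longrightarrow>
  (\<Sum>c<d. (\<Sum>i<k. \<psi> i $ a * cnj (\<psi> i $ c)) * (\<Sum>j<k. \<psi> j $ c * cnj (\<psi> j $ b))) = (\<Sum>i<k. \<psi> i $ a * cnj (\<psi> i $ b))"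
proof -
  have "(\<Sum>c<d. (\<Sum>i<k. \<psi> i $ a * cnj (\<psi> i $ c)) * (\<Sum>j<k. \<psi> j $ c * cnj (\<psi> j $ b)))
      = (\<Sum>c<d. \<Sum>i<k. \<Sum>j<k. (\<psi> i $ a * cnj (\<psi> j $ b)) * (cnj (\<psi> i $ c) * \<psi> j $ c))"
    unfolding sum_product by (intro sum.cong refl) (simp add: mult_ac)
  also have "\<dots> = (\<Sum>i<k. \<Sum>j<k. \<Sum>c<d. (\<psi> i $ a * cnj (\<psi> j $ b)) * (cnj (\<psi> i $ c) * \<psi> j $ c))"
    by (rule trans[OF swap3], rule swap3)
  also have "\<dots> = (\<Sum>i<k. \<Sum>j<k. (\<psi> i $ a * cnj (\<psi> j $ b)) * (if i = j then 1 else 0))"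
    by (intro sum.cong refl) (simp add: sum_distrib_left[symmetric] on)
  also have "\<dots> = (\<Sum>i<k. \<psi> i $ a * cnj (\<psi> i $ b))" by (simp add: if_distrib[of "\<lambda>x. _ * x"] cong: if_cong)
  finally show ?thesis .
qed

lemma Mavg_sq: "a < d \<Longrightarrow> b < d \<Longrightarrow> (\<Sum>c<d. Mavg $$ (a,c) * Mavg $$ (c,b)) = complex_of_real (1 / real k) * Mavg $$ (a,b)"
proof -
  assume ab: "a < d" "b < d"
  define c0 where "c0 = complex_of_real (1 / real k)"
  define Pi where "Pi x y = (\<Sum>i<k. \<psi> i $ x * cnj (\<psi> i $ y))" for x y
  have Mi: "Mavg $$ (x,y) = c0 * Pi x y" if "x < d" "y < d" for x y
    unfolding c0_def Pi_def using Mavg_idx[OF that] .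
  have "(\<Sum>c<d. Mavg $$ (a,c) * Mavg $$ (c,b)) = (\<Sum>c<d. c0 * c0 * (Pi a c * Pi c b))"
    using ab by (intro sum.cong refl) (simp add: Mi)
  also have "\<dots> = c0 * c0 * (\<Sum>c<d. Pi a c * Pi c b)" by (simp only: sum_distrib_left)
  also have "(\<Sum>c<d. Pi a c * Pi c b) = Pi a b" unfolding Pi_def by (rule Pi_sq[OF ab])
  finally show ?thesis unfolding Mi[OF ab] c0_def by (simp only: mult.assoc)
qed

lemma Mavg_eig:
  assumes ev: "eigenvalue Mavg l"
  shows "l = 0 \<or> l = complex_of_real (1 / real k)"
proof -
  obtain v where v: "eigenvector Mavg v l" using ev unfolding eigenvalue_def by blast
  have vc: "v \<in> carrier_vec d" and vnz: "v \<noteq> 0\<^sub>v d" and Mv: "Mavg *\<^sub>v v = l \<cdot>\<^sub>v v"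
    using v Mavg_car unfolding eigenvector_def by auto
  have E1: "(\<Sum>b<d. Mavg $$ (a,b) * v $ b) = l * v $ a" if a: "a < d" for a
  proof -
    have "(Mavg *\<^sub>v v) $ a = (l \<cdot>\<^sub>v v) $ a" using Mv by simp
    thus ?thesis using a vc Mavg_car by (simp add: scalar_prod_def row_def atLeast0LessThan)
  qed
  have E2: "complex_of_real (1 / real k) * (l * v $ a) = l * l * v $ a" if a: "a < d" for a
  proof -
    have "complex_of_real (1 / real k) * (l * v $ a) = (\<Sum>b<d. complex_of_real (1 / real k) * Mavg $$ (a,b) * v $ b)"
      unfolding E1[OF a, symmetric] sum_distrib_left by (simp add: mult_ac)
    also have "\<dots> = (\<Sum>b<d. (\<Sum>c<d. Mavg $$ (a,c) * Mavg $$ (c,b)) * v $ b)"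
      using a Mavg_sq by simp
    also have "\<dots> = (\<Sum>c<d. Mavg $$ (a,c) * (\<Sum>b<d. Mavg $$ (c,b) * v $ b))"
      unfolding sum_distrib_left sum_distrib_right by (subst sum.swap) (simp add: mult_ac)
    also have "\<dots> = (\<Sum>c<d. Mavg $$ (a,c) * (l * v $ c))" using E1 by simp
    also have "\<dots> = l * (\<Sum>c<d. Mavg $$ (a,c) * v $ c)"
      by (simp add: sum_distrib_left mult_ac)
    also have "\<dots> = l * l * v $ a" unfolding E1[OF a] by simp
    finally show ?thesis .
  qed
  have "\<exists>a. a < d \<and> v $ a \<noteq> 0"
  proof (rule ccontr)
    assume "\<not> (\<exists>a. a < d \<and> v $ a \<noteq> 0)"
    hence "v = 0\<^sub>v d" using vc by (intro eq_vecI) auto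
    thus False using vnz by simp
  qed
  then obtain a where a: "a < d" and va: "v $ a \<noteq> 0" by blast
  have "(l - complex_of_real (1 / real k)) * l * v $ a = 0" using E2[OF a] by (simp add: algebra_simps)
  thus ?thesis using va by auto
qed

lemma Mavg_trace: "mtrace Mavg = 1"
proof -
  have "mtrace Mavg = (\<Sum>a<d. complex_of_real (1 / real k) * (\<Sum>j<k. \<psi> j $ a * cnj (\<psi> j $ a)))"
    unfolding mtrace_eq[OF Mavg_car] by (intro sum.cong refl) (simp add: Mavg_idx)
  also have "\<dots> = complex_of_real (1 / real k) * (\<Sum>j<k. \<Sum>a<d. cnj (\<psi> j $ a) * \<psi> j $ a)"
    unfolding sum_distrib_left[symmetric] by (subst sum.swap) (simp add: mult.commute)
  also have "\<dots> = complex_of_real (1 / real k) * (\<Sum>j<k. 1)" using on by simp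
  also have "\<dots> = 1" using k1 by simp
  finally show ?thesis .
qed

lemma ent_val: "l = 0 \<or> l = complex_of_real (1 / real k) \<Longrightarrow> ent_term (Re l) = log 2 (real k) * Re l"
  using k1 by (auto simp: ent_term_def log_divide)

lemma entropy: "vn_entropy Mavg = log 2 (real k)"
proof -
  obtain es where es: "char_poly Mavg = (\<Prod>a\<leftarrow>es. [:- a, 1:])" using char_poly_factorized[OF Mavg_car] by blast
  obtain B where Bc: "B \<in> carrier_mat d d" and ut: "upper_triangular B" and sim: "similar_mat Mavg B"
    using schur_upper_triangular[OF Mavg_car es] by blast
  define xs where "xs = diag_mat B"
  have cp: "char_poly Mavg = (\<Prod>a\<leftarrow>xs. [:- a, 1:])"
    unfolding xs_def char_poly_similar[OF sim] by (rule char_poly_upper_triangular[OF Bc ut])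
  have pr: "proots (char_poly Mavg) = mset xs" unfolding cp by (rule proots_linear_prod)
  have ev: "l = 0 \<or> l = complex_of_real (1 / real k)" if l: "l \<in> set xs" for l
  proof -
    have ne: "char_poly Mavg \<noteq> 0"
    proof
      assume "char_poly Mavg = 0"
      hence "mset xs = {#}" using pr by simp
      thus False using l by simp
    qed
    have "l \<in># proots (char_poly Mavg)" using l pr by simp
    hence "poly (char_poly Mavg) l = 0" using ne by simp
    hence "eigenvalue Mavg l" using eigenvalue_root_char_poly[OF Mavg_car] by blast
    thus ?thesis by (rule Mavg_eig)
  qed
  have sx: "sum_list xs = 1"
  proof -
    have "sum_list xs = mtrace B" unfolding xs_def diag_mat_def mtrace_def
      by (simp add: sum_list_upt1)
    also have "\<dots> = 1" using mtrace_similar[OF sim] Mavg_trace by simp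
    finally show ?thesis .
  qed
  have "vn_entropy Mavg = sum_list (map (\<lambda>x. ent_term (Re x)) xs)"
    unfolding vn_entropy_def pr mset_map[symmetric] sum_mset_sum_list ..
  also have "\<dots> = sum_list (map (\<lambda>x. log 2 (real k) * Re x) xs)"
    by (rule arg_cong[where f=sum_list], rule map_cong[OF refl], rule ent_val[OF ev])
  also have "\<dots> = log 2 (real k) * Re (sum_list xs)"
    by (induction xs) (simp_all add: algebra_simps)
  also have "\<dots> = log 2 (real k)" unfolding sx by simp
  finally show ?thesis .
qed

end

theorem theorem1:
  fixes d k :: nat and \<psi> :: "nat \<Rightarrow> complex vec"
  assumes "k \<ge> 1"
    and "\<And>j. j < k \<Longrightarrow> \<psi> j \<in> carrier_vec d"
    and "\<And>j. j < k \<Longrightarrow> conjugate (\<psi> j) \<bullet> \<psi> j = 1"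
    and "\<And>i j. i < k \<Longrightarrow> j < k \<Longrightarrow> i \<noteq> j \<Longrightarrow> conjugate (\<psi> i) \<bullet> \<psi> j = 0"
  shows "C_MIO d k (\<lambda>_. 1 / real k) (\<lambda>j. proj (\<psi> j))
         + distinguishability d k (\<lambda>_. 1 / real k) \<psi> \<le> log 2 (real d)"
proof -
  interpret ons d k \<psi> using assms by unfold_locales auto
  define S where "S = {(\<Sum>j<k. 1 / real k * robustness d (ptrace_B k d (apply_channel (k * d) Ks (proj (\<psi> j)))))
      | Ks. MIO d (k * d) Ks \<and>
            (\<Sum>j<k. 1 / real k * Re (block_weight d j (apply_channel (k * d) Ks (proj (\<psi> j))))) = P_suc d k (\<lambda>_. 1 / real k) (\<lambda>j. proj (\<psi> j))}"
  have C: "C_MIO d k (\<lambda>_. 1 / real k) (\<lambda>j. proj (\<psi> j)) = log 2 (1 + Sup S)"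
    unfolding C_MIO_def S_def ..
  have inS: "x \<in> S \<Longrightarrow> 0 \<le> x \<and> x \<le> real d / real k - 1" for x
    unfolding S_def Psuc1 using upper by blast
  have ne: "(\<Sum>j<k. 1 / real k * robustness d (ptrace_B k d (apply_channel (k * d) Ko (proj (\<psi> j))))) \<in> S"
    unfolding S_def Psuc1 using Ko_MIO Ko_cons by blast
  have bdd: "bdd_above S" unfolding bdd_above_def using inS by blast
  have s0: "0 \<le> Sup S" using cSup_upper[OF ne bdd] inS[OF ne] by linarith
  have s1: "Sup S \<le> real d / real k - 1" using inS by (intro cSup_least) (use ne in auto)
  have kpos: "real k > 0" using k1 by simp
  have dpos: "real d > 0" using d_pos by simp
  have "log 2 (1 + Sup S) \<le> log 2 (real d / real k)"
    using s0 s1 kpos dpos by (subst log_le_cancel_iff) auto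
  also have "\<dots> = log 2 (real d) - log 2 (real k)" using kpos dpos by (simp add: log_divide)
  finally have c: "C_MIO d k (\<lambda>_. 1 / real k) (\<lambda>j. proj (\<psi> j)) \<le> log 2 (real d) - log 2 (real k)"
    unfolding C .
  have e: "distinguishability d k (\<lambda>_. 1 / real k) \<psi> = log 2 (real k)"
    unfolding distinguishability_def using entropy unfolding Mavg_def .
  show ?thesis using c e by linarith
qed


end
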